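(* Let $\mathbb F$ be a field and define $P_n:=z^2\bigl(y\,\mathrm{HC}_n+y^2\,\mathrm{HC}_n^2\bigr)$, where $y,z$ are variables distinct from the variables of $\mathrm{HC}_n$. Then the $\mathsf p$-family $(P)=(P_n)_{n\in\mathbb N}$ lies in $\mathrm{VNPC}(\trianglelefteq_{\mathsf p})$.
   Context: $\varepsilon$ is a new indeterminate. A $\mathsf p$-family $(f)=(f_n)_{n\in\mathbb N}$ is a sequence of multivariate polynomials whose number of variables and degree are polynomially bounded in $n$. For polynomials over a field $K$, $f\le g$ (projection) means $f=g(\alpha_1,\dots,\alpha_M)$ where each $\alpha_i$ is a variable of $f$ or an element of $K$; $(f)\le_{\mathsf p}(g)$ if there is a polynomially bounded $t$ with $f_n\le g_{t(n)}$ for all $n$. For $f,g$ over $\mathbb F$, $f\trianglelefteq g$ if $f+\varepsilon h\le g$ (projection over $\mathbb F(\varepsilon)$) for some polynomial $h$ over $\mathbb F[\varepsilon]$; $(f)\trianglelefteq_{\mathsf p}(g)$ if $f_n\trianglelefteq g_{t(n)}$ for all $n$ for some polynomially bounded $t$. $\mathrm{HC}_n=\sum_{\pi}\prod_{i=1}^n x_{i,\pi(i)}$, summing over permutations $\pi$ of $\{1,\dots,n\}$ that are $n$-cycles. $\mathrm{VNP}$ is the set of $\mathsf p$-families $(f)$ over $\mathbb F$ with $(f)\le_{\mathsf p}(\mathrm{HC})$, and $\mathrm{VNPC}(\trianglelefteq_{\mathsf p})=\{(f)\in\mathrm{VNP}:(\mathrm{HC})\trianglelefteq_{\mathsf p}(f)\}$.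 *)

theory Defs
  imports "HOL-Library.Poly_Mapping" "HOL-Library.Nat_Bijection"
    "HOL-Computational_Algebra.Polynomial" "HOL-Computational_Algebra.Fraction_Field" "HOL-Combinatorics.Permutations"
begin

text \<open>Multivariate polynomials over a coefficient ring 'a in the variables x_0, x_1, ... (indexed
  by nat): finitely supported maps from monomials (exponent vectors nat =>0 nat) to coefficients.\<close>

type_synonym 'a mpoly = "(nat \<Rightarrow>\<^sub>0 nat) \<Rightarrow>\<^sub>0 'a"

definition mVar :: "nat \<Rightarrow> 'a::comm_semiring_1 mpoly" where
  "mVar i = Poly_Mapping.single (Poly_Mapping.single i 1) 1"

definition mConst :: "'a::comm_semiring_1 \<Rightarrow> 'a mpoly" where
  "mConst c = Poly_Mapping.single 0 c"

definition mvars :: "'a::zero mpoly \<Rightarrow> nat set" where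
  "mvars p = (\<Union>m \<in> Poly_Mapping.keys p. Poly_Mapping.keys m)"

definition mdegree :: "'a::zero mpoly \<Rightarrow> nat" where
  "mdegree p = Max (insert 0 ((\<lambda>m. \<Sum>i\<in>Poly_Mapping.keys m. Poly_Mapping.lookup m i) ` Poly_Mapping.keys p))"

definition msubst :: "(nat \<Rightarrow> 'a::comm_semiring_1 mpoly) \<Rightarrow> 'a mpoly \<Rightarrow> 'a mpoly" where
  "msubst \<sigma> p = (\<Sum>m\<in>Poly_Mapping.keys p. mConst (Poly_Mapping.lookup p m) * (\<Prod>i\<in>Poly_Mapping.keys m. \<sigma> i ^ Poly_Mapping.lookup m i))"

definition proj_le :: "'a::comm_semiring_1 mpoly \<Rightarrow> 'a mpoly \<Rightarrow> bool" where
  "proj_le f g \<longleftrightarrow> (\<exists>\<alpha>. (\<forall>i. (\<exists>j. \<alpha> i = mVar j) \<or> (\<exists>c. \<alpha> i = mConst c)) \<and> f = msubst \<alpha> g)"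

definition poly_bounded :: "(nat \<Rightarrow> nat) \<Rightarrow> bool" where
  "poly_bounded t \<longleftrightarrow> (\<exists>c k. \<forall>n. t n \<le> c * (n + 1) ^ k)"

definition p_family :: "(nat \<Rightarrow> 'a::zero mpoly) \<Rightarrow> bool" where
  "p_family f \<longleftrightarrow> poly_bounded (\<lambda>n. card (mvars (f n))) \<and> poly_bounded (\<lambda>n. mdegree (f n))"

definition p_proj_le :: "(nat \<Rightarrow> 'a::comm_semiring_1 mpoly) \<Rightarrow> (nat \<Rightarrow> 'a mpoly) \<Rightarrow> bool" where
  "p_proj_le f g \<longleftrightarrow> (\<exists>t. poly_bounded t \<and> (\<forall>n. proj_le (f n) (g (t n))))"

text \<open>Border projection. F(eps) is the fraction field of F[eps]. Polynomials over F and F[eps]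
  are embedded coefficientwise into polynomials over F(eps).\<close>
definition eps :: "'a::field poly fract" where
  "eps = Fract [:0, 1:] 1"

definition lift_F :: "'a::field mpoly \<Rightarrow> 'a poly fract mpoly" where
  "lift_F f = Poly_Mapping.map (\<lambda>c. Fract [:c:] 1) f"

definition lift_Feps :: "'a::field poly mpoly \<Rightarrow> 'a poly fract mpoly" where
  "lift_Feps h = Poly_Mapping.map (\<lambda>c. Fract c 1) h"

definition border_le :: "'a::field mpoly \<Rightarrow> 'a mpoly \<Rightarrow> bool" where
  "border_le f g \<longleftrightarrow> (\<exists>h. proj_le (lift_F f + mConst eps * lift_Feps h) (lift_F g))"

definition p_border_le :: "(nat \<Rightarrow> 'a::field mpoly) \<Rightarrow> (nat \<Rightarrow> 'a mpoly) \<Rightarrow> bool" where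
  "p_border_le f g \<longleftrightarrow> (\<exists>t. poly_bounded t \<and> (\<forall>n. border_le (f n) (g (t n))))"

text \<open>Hamiltonian cycle polynomial. Variable x_{i,j} is mVar (xvar i j); the indices 0 and 1 are
  kept free for the extra variables y and z.\<close>
definition xvar :: "nat \<Rightarrow> nat \<Rightarrow> nat" where
  "xvar i j = prod_encode (i, j) + 2"

definition is_n_cycle :: "nat \<Rightarrow> (nat \<Rightarrow> nat) \<Rightarrow> bool" where
  "is_n_cycle n \<pi> \<longleftrightarrow> \<pi> permutes {1..n} \<and> (\<forall>i\<in>{1..n}. \<forall>j\<in>{1..n}. \<exists>k. (\<pi> ^^ k) i = j)"

definition HC :: "nat \<Rightarrow> 'a::comm_ring_1 mpoly" where
  "HC n = (\<Sum>\<pi> \<in> {\<pi>. is_n_cycle n \<pi>}. \<Prod>i\<in>{1..n}. mVar (xvar i (\<pi> i)))"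

definition VNP :: "(nat \<Rightarrow> 'a::comm_ring_1 mpoly) set" where
  "VNP = {f. p_family f \<and> p_proj_le f HC}"

definition VNPC_border :: "(nat \<Rightarrow> 'a::field mpoly) set" where
  "VNPC_border = {f. f \<in> VNP \<and> p_border_le HC f}"

end

theory Submission
  imports Defs
begin

lemma mConst_0[simp]: "mConst 0 = 0" by (simp add: mConst_def)
lemma mConst_1[simp]: "mConst 1 = 1" by (simp add: mConst_def)
lemma mConst_add: "mConst (a + b) = mConst a + mConst b" by (simp add: mConst_def single_add)
lemma mConst_mult: "mConst (a * b) = mConst a * mConst b" by (simp add: mConst_def mult_single)

definition mmono :: "(nat \<Rightarrow> 'a::comm_semiring_1 mpoly) \<Rightarrow> (nat \<Rightarrow>\<^sub>0 nat) \<Rightarrow> 'a mpoly" where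
  "mmono \<alpha> m = (\<Prod>i\<in>Poly_Mapping.keys m. \<alpha> i ^ Poly_Mapping.lookup m i)"

lemma mmono_superset: assumes "finite S" "Poly_Mapping.keys m \<subseteq> S"
  shows "mmono \<alpha> m = (\<Prod>i\<in>S. \<alpha> i ^ Poly_Mapping.lookup m i)"
  unfolding mmono_def
  by (rule prod.mono_neutral_left) (use assms in \<open>auto simp: in_keys_iff\<close>)

lemma mmono_add: "mmono \<alpha> (a + b) = mmono \<alpha> a * mmono \<alpha> b"
proof -
  let ?S = "Poly_Mapping.keys a \<union> Poly_Mapping.keys b"
  have f: "finite ?S" by simp
  have "mmono \<alpha> (a + b) = (\<Prod>i\<in>?S. \<alpha> i ^ Poly_Mapping.lookup (a+b) i)"
    by (rule mmono_superset[OF f]) (simp add: keys_add)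
  also have "\<dots> = (\<Prod>i\<in>?S. \<alpha> i ^ Poly_Mapping.lookup a i * \<alpha> i ^ Poly_Mapping.lookup b i)"
    by (simp add: lookup_add power_add)
  also have "\<dots> = mmono \<alpha> a * mmono \<alpha> b"
    by (simp add: prod.distrib mmono_superset[OF f])
  finally show ?thesis .
qed

lemma mmono_zero[simp]: "mmono \<alpha> 0 = 1" by (simp add: mmono_def)

lemma msubst_superset: assumes "finite S" "Poly_Mapping.keys p \<subseteq> S"
  shows "msubst \<alpha> p = (\<Sum>m\<in>S. mConst (Poly_Mapping.lookup p m) * mmono \<alpha> m)"
  unfolding msubst_def mmono_def[symmetric]
  by (rule sum.mono_neutral_left) (use assms in \<open>auto simp: in_keys_iff\<close>)

lemma msubst_0[simp]: "msubst \<alpha> 0 = 0" by (simp add: msubst_def)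

lemma msubst_add: "msubst \<alpha> (p + q) = msubst \<alpha> p + msubst \<alpha> q"
proof -
  let ?S = "Poly_Mapping.keys p \<union> Poly_Mapping.keys q"
  have f: "finite ?S" by simp
  show ?thesis
    by (simp add: msubst_superset[OF f] keys_add lookup_add mConst_add distrib_right sum.distrib)
qed

lemma msubst_sum: "msubst \<alpha> (\<Sum>x\<in>A. f x) = (\<Sum>x\<in>A. msubst \<alpha> (f x))"
  by (induction A rule: infinite_finite_induct) (auto simp: msubst_add)

lemma msubst_single: "msubst \<alpha> (Poly_Mapping.single m c) = mConst c * mmono \<alpha> m"
  by (subst msubst_superset[of "{m}"]) (auto simp: lookup_single)

lemma poly_mapping_decomp: "p = (\<Sum>k\<in>Poly_Mapping.keys p. Poly_Mapping.single k (Poly_Mapping.lookup p k))"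
  by (rule poly_mapping_eqI) (simp add: lookup_sum lookup_single when_def in_keys_iff)

lemma msubst_mult: "msubst \<alpha> (p * q) = msubst \<alpha> p * msubst \<alpha> q"
proof -
  have "p * q = (\<Sum>a\<in>Poly_Mapping.keys p. Poly_Mapping.single a (Poly_Mapping.lookup p a)) *
     (\<Sum>b\<in>Poly_Mapping.keys q. Poly_Mapping.single b (Poly_Mapping.lookup q b))"
    by (simp only: poly_mapping_decomp[symmetric])
  also have "\<dots> = (\<Sum>a\<in>Poly_Mapping.keys p. \<Sum>b\<in>Poly_Mapping.keys q.
     Poly_Mapping.single a (Poly_Mapping.lookup p a) * Poly_Mapping.single b (Poly_Mapping.lookup q b))"
    by (rule sum_product)
  finally have "msubst \<alpha> (p * q) = (\<Sum>a\<in>Poly_Mapping.keys p. \<Sum>b\<in>Poly_Mapping.keys q.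
     mConst (Poly_Mapping.lookup p a) * mmono \<alpha> a * (mConst (Poly_Mapping.lookup q b) * mmono \<alpha> b))"
    by (simp only: msubst_sum mult_single msubst_single mConst_mult mmono_add mult_ac)
  also have "\<dots> = msubst \<alpha> p * msubst \<alpha> q"
    by (simp add: msubst_def mmono_def sum_product)
  finally show ?thesis .
qed

lemma msubst_mConst[simp]: "msubst \<alpha> (mConst c) = mConst c"
  by (simp add: mConst_def msubst_single)

lemma msubst_1[simp]: "msubst \<alpha> 1 = 1"
  using msubst_mConst[of \<alpha> 1] by simp

lemma msubst_prod: "msubst \<alpha> (\<Prod>x\<in>A. f x) = (\<Prod>x\<in>A. msubst \<alpha> (f x))"
  by (induction A rule: infinite_finite_induct) (auto simp: msubst_mult)

lemma msubst_power: "msubst \<alpha> (p ^ k) = msubst \<alpha> p ^ k"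
  by (induction k) (auto simp: msubst_mult)

lemma msubst_mVar[simp]: "msubst \<alpha> (mVar i) = \<alpha> i"
  by (simp add: mVar_def msubst_single mmono_def)

definition cycp :: "'v set \<Rightarrow> ('v \<Rightarrow> 'v) \<Rightarrow> bool" where
  "cycp V \<pi> \<longleftrightarrow> \<pi> permutes V \<and> (\<forall>i\<in>V. \<forall>j\<in>V. \<exists>k. (\<pi> ^^ k) i = j)"

lemma is_n_cycle_cycp: "is_n_cycle n = cycp {1..n}"
  by (simp add: fun_eq_iff is_n_cycle_def cycp_def)

lemma HC_cycp: "HC n = (\<Sum>\<pi> \<in> {\<pi>. cycp {1..n} \<pi>}. \<Prod>i\<in>{1..n}. mVar (xvar i (\<pi> i)))"
  by (simp add: HC_def is_n_cycle_cycp)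

lemma finite_cycp: "finite V \<Longrightarrow> finite {\<pi>. cycp V \<pi>}"
  by (rule finite_subset[OF _ finite_permutations[of V]]) (auto simp: cycp_def)

lemma cycp_invariant:
  assumes "cycp V \<pi>" "x \<in> S" "x \<in> V" "\<And>s. s \<in> S \<Longrightarrow> \<pi> s \<in> S" "y \<in> V"
  shows "y \<in> S"
proof -
  obtain k where k: "(\<pi> ^^ k) x = y" using assms unfolding cycp_def by blast
  have "(\<pi> ^^ k) x \<in> S" for k
    by (induction k) (auto simp: assms)
  then show ?thesis using k by blast
qed

lemma permutes_in: "\<pi> permutes V \<Longrightarrow> x \<in> V \<Longrightarrow> \<pi> x \<in> V"
  by (simp add: permutes_in_image)

lemma invariant_cycp:
  assumes perm: "\<pi> permutes V"
    and inv: "\<And>S. S \<subseteq> V \<Longrightarrow> (\<forall>s\<in>S. \<pi> s \<in> S) \<Longrightarrow> S \<noteq> {} \<Longrightarrow> V \<subseteq> S"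
  shows "cycp V \<pi>"
  unfolding cycp_def
proof (intro conjI perm ballI)
  fix i j assume i: "i \<in> V" and j: "j \<in> V"
  let ?S = "{(\<pi> ^^ k) i | k. True}"
  have sub: "?S \<subseteq> V"
  proof
    fix x assume "x \<in> ?S"
    then obtain k where "x = (\<pi> ^^ k) i" by blast
    moreover have "(\<pi> ^^ k) i \<in> V" by (induction k) (auto simp: i permutes_in[OF perm])
    ultimately show "x \<in> V" by simp
  qed
  have "\<forall>s\<in>?S. \<pi> s \<in> ?S"
  proof
    fix s assume "s \<in> ?S"
    then obtain k where "s = (\<pi> ^^ k) i" by blast
    then have "\<pi> s = (\<pi> ^^ Suc k) i" by simp
    then show "\<pi> s \<in> ?S" by blast
  qed
  moreover have "i \<in> ?S" by (rule CollectI, rule exI[of _ 0]) simp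
  ultimately have "V \<subseteq> ?S" using inv[OF sub] by blast
  then show "\<exists>k. (\<pi> ^^ k) i = j" using j by blast
qed

lemma complement_invariant:
  assumes perm: "\<pi> permutes V" and fin: "finite V" and S: "S \<subseteq> V" and inv: "\<forall>s\<in>S. \<pi> s \<in> S"
    and v: "v \<in> V" "v \<notin> S"
  shows "\<pi> v \<notin> S"
proof
  assume a: "\<pi> v \<in> S"
  have injV: "inj_on \<pi> V" using perm by (meson permutes_inj_on)
  have "\<pi> ` S \<subseteq> S" using inv by blast
  moreover have "card (\<pi> ` S) = card S" using card_image[OF inj_on_subset[OF injV S]] .
  moreover have "finite S" using fin S finite_subset by blast
  ultimately have "\<pi> ` S = S" by (simp add: card_subset_eq)
  then obtain s where "s \<in> S" "\<pi> s = \<pi> v" using a by force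
  then have "s = v" using injV S v \<open>s \<in> S\<close> by (simp add: inj_on_eq_iff subsetD)
  then show False using \<open>s \<in> S\<close> v by simp
qed

definition conjp :: "('u \<Rightarrow> 'v) \<Rightarrow> 'u set \<Rightarrow> 'v set \<Rightarrow> ('u \<Rightarrow> 'u) \<Rightarrow> ('v \<Rightarrow> 'v)" where
  "conjp f U V \<pi> = (\<lambda>v. if v \<in> V then f (\<pi> (inv_into U f v)) else v)"

lemma conjp_permutes:
  assumes f: "bij_betw f U V" and p: "\<pi> permutes U"
  shows "conjp f U V \<pi> permutes V"
proof -
  have g: "bij_betw (inv_into U f) V U" using f by (rule bij_betw_inv_into)
  have "bij_betw (f \<circ> \<pi> \<circ> inv_into U f) V V"
    by (rule bij_betw_trans[OF g bij_betw_trans[OF permutes_imp_bij[OF p] f]])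
  then have "bij_betw (conjp f U V \<pi>) V V"
    by (rule bij_betw_cong[THEN iffD1, rotated]) (simp add: conjp_def)
  moreover have "\<forall>x. x \<notin> V \<longrightarrow> conjp f U V \<pi> x = x" by (simp add: conjp_def)
  ultimately show ?thesis by (meson bij_imp_permutes)
qed

lemma conjp_apply:
  assumes f: "bij_betw f U V" and p: "\<pi> permutes U" and i: "i \<in> U"
  shows "conjp f U V \<pi> (f i) = f (\<pi> i)"
  using assms by (simp add: conjp_def bij_betw_apply bij_betw_inv_into_left)

lemma conjp_funpow:
  assumes f: "bij_betw f U V" and p: "\<pi> permutes U" and i: "i \<in> U"
  shows "(conjp f U V \<pi> ^^ k) (f i) = f ((\<pi> ^^ k) i)"
proof (induction k)
  case 0 then show ?case by simp
next
  case (Suc k)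
  have "(\<pi> ^^ k) i \<in> U" by (induction k) (auto simp: i permutes_in[OF p])
  then show ?case using Suc by (simp add: conjp_apply[OF f p])
qed

lemma conjp_cycp:
  assumes f: "bij_betw f U V" and c: "cycp U \<pi>"
  shows "cycp V (conjp f U V \<pi>)"
proof -
  have p: "\<pi> permutes U" using c by (simp add: cycp_def)
  show ?thesis unfolding cycp_def
  proof (intro conjI conjp_permutes[OF f p] ballI)
    fix a b assume a: "a \<in> V" and b: "b \<in> V"
    have im: "f ` U = V" using f by (simp add: bij_betw_def)
    obtain i where i: "i \<in> U" "a = f i" using a im by blast
    obtain j where j: "j \<in> U" "b = f j" using b im by blast
    obtain k where k: "(\<pi> ^^ k) i = j" using c i j by (auto simp: cycp_def)
    have "(conjp f U V \<pi> ^^ k) a = b"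
      using conjp_funpow[OF f p i(1), of k] i(2) j(2) k by simp
    then show "\<exists>k. (conjp f U V \<pi> ^^ k) a = b" by blast
  qed
qed

lemma conjp_inverse:
  assumes f: "bij_betw f U V" and p: "\<pi> permutes U"
  shows "conjp (inv_into U f) V U (conjp f U V \<pi>) = \<pi>"
proof (rule ext)
  fix x
  have g: "bij_betw (inv_into U f) V U" using f by (rule bij_betw_inv_into)
  have injg: "inj_on (inv_into U f) V" using g by (rule bij_betw_imp_inj_on)
  show "conjp (inv_into U f) V U (conjp f U V \<pi>) x = \<pi> x"
  proof (cases "x \<in> U")
    case True
    have fx: "f x \<in> V" by (rule bij_betw_apply[OF f True])
    have gfx: "inv_into U f (f x) = x" using f True by (rule bij_betw_inv_into_left)
    have "inv_into V (inv_into U f) (inv_into U f (f x)) = f x"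
      using injg fx by (rule inv_into_f_f)
    then have e1: "inv_into V (inv_into U f) x = f x" unfolding gfx .
    have px: "\<pi> x \<in> U" by (rule permutes_in[OF p True])
    have "conjp (inv_into U f) V U (conjp f U V \<pi>) x = inv_into U f (conjp f U V \<pi> (f x))"
      using True by (simp only: conjp_def e1 if_True)
    also have "\<dots> = inv_into U f (f (\<pi> x))" using conjp_apply[OF f p True] by (rule arg_cong)
    also have "\<dots> = \<pi> x" using f px by (rule bij_betw_inv_into_left)
    finally show ?thesis .
  next
    case False
    then show ?thesis using p by (simp add: conjp_def permutes_not_in)
  qed
qed

lemma conjp_inverse2:
  assumes f: "bij_betw f U V" and p: "\<rho> permutes V"
  shows "conjp f U V (conjp (inv_into U f) V U \<rho>) = \<rho>"
proof (rule ext)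
  fix v
  have g: "bij_betw (inv_into U f) V U" using f by (rule bij_betw_inv_into)
  show "conjp f U V (conjp (inv_into U f) V U \<rho>) v = \<rho> v"
  proof (cases "v \<in> V")
    case True
    have gv: "inv_into U f v \<in> U" by (rule bij_betw_apply[OF g True])
    have "conjp (inv_into U f) V U \<rho> (inv_into U f v) = inv_into U f (\<rho> v)"
      using conjp_apply[OF g p True] .
    moreover have "\<rho> v \<in> V" by (rule permutes_in[OF p True])
    ultimately show ?thesis using True f
      by (simp add: conjp_def bij_betw_inv_into_right)
  next
    case False
    then show ?thesis using p by (simp add: conjp_def permutes_not_in)
  qed
qed

lemma cycp_reindex:
  assumes f: "bij_betw f U V" and fin: "finite U"
  shows "(\<Sum>\<pi>\<in>{\<pi>. cycp U \<pi>}. \<Prod>i\<in>U. W (f i) (f (\<pi> i))) =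
         (\<Sum>\<rho>\<in>{\<rho>. cycp V \<rho>}. \<Prod>v\<in>V. (W v (\<rho> v) :: 'a::comm_ring_1))"
proof (rule sum.reindex_bij_witness[of _ "conjp (inv_into U f) V U" "conjp f U V"])
  have g: "bij_betw (inv_into U f) V U" using f by (rule bij_betw_inv_into)
  fix \<rho> assume "\<rho> \<in> {\<rho>. cycp V \<rho>}"
  then have c: "cycp V \<rho>" by simp
  then have p: "\<rho> permutes V" by (simp add: cycp_def)
  show "conjp (inv_into U f) V U \<rho> \<in> {\<pi>. cycp U \<pi>}" using conjp_cycp[OF g c] by simp
  show "conjp f U V (conjp (inv_into U f) V U \<rho>) = \<rho>"
    using conjp_inverse2[OF f p] by simp
next
  fix \<pi> assume "\<pi> \<in> {\<pi>. cycp U \<pi>}"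
  then have c: "cycp U \<pi>" by simp
  then have p: "\<pi> permutes U" by (simp add: cycp_def)
  show "conjp (inv_into U f) V U (conjp f U V \<pi>) = \<pi>" using conjp_inverse[OF f p] .
  show "conjp f U V \<pi> \<in> {\<rho>. cycp V \<rho>}" using conjp_cycp[OF f c] by simp
  show "(\<Prod>v\<in>V. W v (conjp f U V \<pi> v)) = (\<Prod>i\<in>U. W (f i) (f (\<pi> i)))"
  proof -
    have "(\<Prod>i\<in>U. W (f i) (conjp f U V \<pi> (f i))) = (\<Prod>v\<in>V. W v (conjp f U V \<pi> v))"
      by (rule prod.reindex_bij_betw[OF f])
    moreover have "(\<Prod>i\<in>U. W (f i) (conjp f U V \<pi> (f i))) = (\<Prod>i\<in>U. W (f i) (f (\<pi> i)))"
      by (rule prod.cong) (simp_all add: conjp_apply[OF f p])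
    ultimately show ?thesis by argo
  qed
qed

datatype vtx = Bo bool | Hh bool | Bi bool | In bool nat | Ce bool nat | Ou bool nat

fun vin :: "nat \<Rightarrow> vtx \<Rightarrow> bool" where
  "vin n (In g i) = (2 \<le> i \<and> i \<le> n)"
| "vin n (Ce g i) = (2 \<le> i \<and> i \<le> n)"
| "vin n (Ou g i) = (2 \<le> i \<and> i \<le> n)"
| "vin n _ = True"

definition Vs :: "nat \<Rightarrow> vtx set" where "Vs n = {v. vin n v}"

fun gad :: "vtx \<Rightarrow> bool" where
  "gad (Bo g) = g" | "gad (Hh g) = g" | "gad (Bi g) = g"
| "gad (In g i) = g" | "gad (Ce g i) = g" | "gad (Ou g i) = g"

fun E :: "nat \<Rightarrow> vtx \<Rightarrow> vtx \<Rightarrow> bool" where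
  "E n (Bo g) v = (v = Hh g \<or> (g \<and> v = Ou g 2))"
| "E n (Hh g) v = ((\<exists>j. v = In g j) \<or> v = Bi g)"
| "E n (Bi g) v = (v = Bo (\<not> g))"
| "E n (In g i) v = (v = Ce g i \<or> (i < n \<and> v = Ou g (Suc i)) \<or> (i = n \<and> v = Hh g))"
| "E n (Ce g i) v = (v = In g i \<or> v = Ou g i)"
| "E n (Ou g i) v = (v = Ce g i \<or> v = Bi g \<or> (\<exists>j. j \<noteq> i \<and> v = In g j))"

fun hstep :: "(nat \<Rightarrow> nat) \<Rightarrow> vtx \<Rightarrow> vtx" where
  "hstep \<sigma> (Bo g) = Hh g"
| "hstep \<sigma> (Hh g) = In g (\<sigma> 1)"
| "hstep \<sigma> (In g i) = Ce g i"
| "hstep \<sigma> (Ce g i) = Ou g i"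
| "hstep \<sigma> (Ou g i) = (if \<sigma> i = 1 then Bi g else In g (\<sigma> i))"
| "hstep \<sigma> (Bi g) = Bo (\<not> g)"

fun rstep :: "nat \<Rightarrow> vtx \<Rightarrow> vtx" where
  "rstep n (Bo g) = Ou g 2"
| "rstep n (Ou g i) = Ce g i"
| "rstep n (Ce g i) = In g i"
| "rstep n (In g i) = (if i = n then Hh g else Ou g (Suc i))"
| "rstep n (Hh g) = Bi g"
| "rstep n (Bi g) = Bo (\<not> g)"

fun mstep :: "nat \<Rightarrow> (nat \<Rightarrow> nat) option \<Rightarrow> vtx \<Rightarrow> vtx" where
  "mstep n None v = rstep n v"
| "mstep n (Some \<sigma>) v = hstep \<sigma> v"

definition PhiM :: "nat \<Rightarrow> (bool \<Rightarrow> (nat \<Rightarrow> nat) option) \<Rightarrow> vtx \<Rightarrow> vtx" where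
  "PhiM n mf v = (if vin n v then mstep n (mf (gad v)) v else v)"

definition validm :: "nat \<Rightarrow> bool \<Rightarrow> (nat \<Rightarrow> nat) option \<Rightarrow> bool" where
  "validm n g m \<longleftrightarrow> (m = None \<and> g) \<or> (\<exists>\<sigma>. m = Some \<sigma> \<and> cycp {1..n} \<sigma>)"

context
  fixes n :: nat and \<sigma> :: "nat \<Rightarrow> nat"
  assumes n2: "2 \<le> n" and sc: "cycp {1..n} \<sigma>"
begin

lemma s_perm: "\<sigma> permutes {1..n}" using sc by (simp add: cycp_def)

lemma s_range: "i \<in> {1..n} \<Longrightarrow> \<sigma> i \<in> {1..n}"
  by (rule permutes_in[OF s_perm])

lemma s_range': "1 \<le> i \<Longrightarrow> i \<le> n \<Longrightarrow> 1 \<le> \<sigma> i \<and> \<sigma> i \<le> n"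
  using s_range by auto

lemma s_out: "i \<notin> {1..n} \<Longrightarrow> \<sigma> i = i"
  using s_perm by (simp add: permutes_not_in)

lemma s_inj: "\<sigma> i = \<sigma> j \<Longrightarrow> i = j"
  using permutes_inj[OF s_perm] by (simp add: inj_eq)

lemma s_surj: "\<exists>i. \<sigma> i = j"
  using permutes_surj[OF s_perm] by (metis surjD)

lemma s_nofix: assumes "i \<in> {1..n}" shows "\<sigma> i \<noteq> i"
proof
  assume fx: "\<sigma> i = i"
  define j where "j = (if i = 1 then 2 else (1::nat))"
  have j: "j \<in> {1..n}" "j \<noteq> i" using n2 assms by (auto simp: j_def)
  have "\<forall>i\<in>{1..n}. \<forall>j\<in>{1..n}. \<exists>k. (\<sigma> ^^ k) i = j" using sc by (simp add: cycp_def)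
  then obtain k where "(\<sigma> ^^ k) i = j" using assms j(1) by blast
  moreover have "(\<sigma> ^^ k) i = i" for k by (induction k) (auto simp: fx)
  ultimately show False using j by simp
qed

end


lemma s_one: "2 \<le> (n::nat) \<Longrightarrow> cycp {1..n} \<sigma> \<Longrightarrow> 2 \<le> \<sigma> 1 \<and> \<sigma> 1 \<le> n"
  using s_nofix[of n \<sigma> 1] s_range'[of n \<sigma> 1] by auto

lemma s_other: "2 \<le> (n::nat) \<Longrightarrow> cycp {1..n} \<sigma> \<Longrightarrow> 2 \<le> i \<Longrightarrow> i \<le> n \<Longrightarrow> \<sigma> i \<noteq> 1 \<Longrightarrow> 2 \<le> \<sigma> i \<and> \<sigma> i \<le> n"
  using s_range'[of n \<sigma> i] by auto

lemma hstep_in: assumes "2 \<le> (n::nat)" "cycp {1..n} \<sigma>" "vin n v" shows "vin n (hstep \<sigma> v)"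
  using assms s_one[OF assms(1,2)] s_other[OF assms(1,2)] by (cases v) auto

lemma rstep_in: assumes "2 \<le> (n::nat)" "vin n v" shows "vin n (rstep n v)"
  using assms by (cases v) auto

lemma hstep_E: assumes "2 \<le> (n::nat)" "cycp {1..n} \<sigma>" "vin n v" shows "E n v (hstep \<sigma> v)"
  using assms s_nofix[OF assms(1,2)] by (cases v) auto

lemma rstep_E: assumes "2 \<le> (n::nat)" "vin n v" "gad v" shows "E n v (rstep n v)"
  using assms by (cases v) auto

lemma hstep_inj: assumes "2 \<le> (n::nat)" "cycp {1..n} \<sigma>" "vin n u" "vin n v" "gad u = gad v"
  "hstep \<sigma> u = hstep \<sigma> v" shows "u = v"
proof -
  have inj: "\<sigma> i = \<sigma> j \<longleftrightarrow> i = j" for i j using s_inj[OF assms(1,2)] by blast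
  show ?thesis
  using assms s_nofix[OF assms(1,2)] s_one[OF assms(1,2)]
  by (cases u; cases v) (auto split: if_splits simp: inj intro: s_inj[OF assms(1,2)])
qed

lemma rstep_inj: assumes "2 \<le> (n::nat)" "vin n u" "vin n v" "gad u = gad v"
  "rstep n u = rstep n v" shows "u = v"
  using assms by (cases u; cases v) (auto split: if_splits)

lemma mstep_gad: "gad (mstep n m v) = gad v \<or> (\<exists>g. v = Bi g)"
  by (cases m; cases v) auto

lemma mstep_notBo: "mstep n m v \<noteq> Bo (gad v)"
  by (cases m; cases v) auto

lemma mstep_Bi: "mstep n m (Bi g) = Bo (\<not> g)"
  by (cases m) auto


lemma Vs_sub: "Vs n \<subseteq> range Bo \<union> range Hh \<union> range Bi \<union> case_prod In ` (UNIV \<times> {2..n})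
   \<union> case_prod Ce ` (UNIV \<times> {2..n}) \<union> case_prod Ou ` (UNIV \<times> {2..n})"
proof
  fix v assume "v \<in> Vs n"
  then show "v \<in> range Bo \<union> range Hh \<union> range Bi \<union> case_prod In ` (UNIV \<times> {2..n})
   \<union> case_prod Ce ` (UNIV \<times> {2..n}) \<union> case_prod Ou ` (UNIV \<times> {2..n})"
    by (cases v) (auto simp: Vs_def)
qed

lemma finite_Vs: "finite (Vs n)"
  by (rule finite_subset[OF Vs_sub]) auto

lemma card_Vs: "card (Vs n) \<le> 6 * n + 6"
proof -
  have b: "card (range (f :: bool \<Rightarrow> vtx)) \<le> 2" for f
    using card_image_le[of UNIV f] by simp
  have c: "card (case_prod f ` (UNIV \<times> {2..n}) :: vtx set) \<le> 2 * n" for f :: "bool \<Rightarrow> nat \<Rightarrow> vtx"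
  proof -
    have "card (case_prod f ` (UNIV \<times> {2..n})) \<le> card (UNIV \<times> {2..n} :: (bool \<times> nat) set)"
      by (rule card_image_le) simp
    also have "\<dots> \<le> 2 * n" by (simp add: card_cartesian_product)
    finally show ?thesis .
  qed
  have "card (Vs n) \<le> card (range Bo \<union> range Hh \<union> range Bi \<union> case_prod In ` (UNIV \<times> {2..n})
   \<union> case_prod Ce ` (UNIV \<times> {2..n}) \<union> case_prod Ou ` (UNIV \<times> {2..n}))"
    by (rule card_mono[OF _ Vs_sub]) auto
  also have "\<dots> \<le> 6 * n + 6"
    using b[of Bo] b[of Hh] b[of Bi] c[of In] c[of Ce] c[of Ou]
      card_Un_le[of "range Bo" "range Hh"]
      card_Un_le[of "range Bo \<union> range Hh" "range Bi"]
      card_Un_le[of "range Bo \<union> range Hh \<union> range Bi" "case_prod In ` (UNIV \<times> {2..n})"]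
      card_Un_le[of "range Bo \<union> range Hh \<union> range Bi \<union> case_prod In ` (UNIV \<times> {2..n})" "case_prod Ce ` (UNIV \<times> {2..n})"]
      card_Un_le[of "range Bo \<union> range Hh \<union> range Bi \<union> case_prod In ` (UNIV \<times> {2..n}) \<union> case_prod Ce ` (UNIV \<times> {2..n})" "case_prod Ou ` (UNIV \<times> {2..n})"]
    by linarith
  finally show ?thesis .
qed

context
  fixes n :: nat and mf :: "bool \<Rightarrow> (nat \<Rightarrow> nat) option"
  assumes n2: "2 \<le> n" and val: "\<And>g. validm n g (mf g)"
begin

lemma PhiM_in: "vin n v \<Longrightarrow> vin n (PhiM n mf v)"
  using val[of "gad v"] hstep_in[OF n2] rstep_in[OF n2]
  by (auto simp: PhiM_def validm_def)

lemma PhiM_E: "vin n v \<Longrightarrow> E n v (PhiM n mf v)"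
  using val[of "gad v"] hstep_E[OF n2] rstep_E[OF n2]
  by (auto simp: PhiM_def validm_def)

lemma PhiM_inj: "inj_on (PhiM n mf) (Vs n)"
proof (rule inj_onI)
  fix u v assume u: "u \<in> Vs n" and v: "v \<in> Vs n" and e: "PhiM n mf u = PhiM n mf v"
  have u': "vin n u" and v': "vin n v" using u v by (auto simp: Vs_def)
  have e': "mstep n (mf (gad u)) u = mstep n (mf (gad v)) v" using e u' v' by (simp add: PhiM_def)
  show "u = v"
  proof (cases "gad u = gad v")
    case True
    then have e2: "mstep n (mf (gad u)) u = mstep n (mf (gad u)) v" using e' by simp
    show ?thesis
    proof (cases "mf (gad u)")
      case None
      then show ?thesis using e2 rstep_inj[OF n2 u' v' True] by simp
    next
      case (Some \<sigma>)
      then have "cycp {1..n} \<sigma>" using val[of "gad u"] by (simp add: validm_def)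
      then show ?thesis using e2 Some hstep_inj[OF n2 _ u' v' True] by simp
    qed
  next
    case False
    have gu: "gad (mstep n (mf (gad u)) u) = gad u \<or> (\<exists>g. u = Bi g)" by (rule mstep_gad)
    have gv: "gad (mstep n (mf (gad v)) v) = gad v \<or> (\<exists>g. v = Bi g)" by (rule mstep_gad)
    have nu: "mstep n (mf (gad u)) u \<noteq> Bo (gad u)" by (rule mstep_notBo)
    have nv: "mstep n (mf (gad v)) v \<noteq> Bo (gad v)" by (rule mstep_notBo)
    show ?thesis using gu gv nu nv e' False mstep_Bi by (cases "gad u"; cases "gad v") auto
  qed
qed

lemma PhiM_perm: "PhiM n mf permutes Vs n"
proof -
  have sub: "PhiM n mf ` Vs n \<subseteq> Vs n" using PhiM_in by (auto simp: Vs_def)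
  have "PhiM n mf ` Vs n = Vs n" by (rule endo_inj_surj[OF finite_Vs sub PhiM_inj])
  then have "bij_betw (PhiM n mf) (Vs n) (Vs n)" using PhiM_inj by (simp add: bij_betw_def)
  moreover have "\<forall>x. x \<notin> Vs n \<longrightarrow> PhiM n mf x = x" by (simp add: PhiM_def Vs_def)
  ultimately show ?thesis by (meson bij_imp_permutes)
qed

lemma fill:
  assumes S: "S \<subseteq> Vs n" and cl: "\<forall>s\<in>S. PhiM n mf s \<in> S" and b: "Bo g \<in> S"
  shows "(\<forall>v\<in>Vs n. gad v = g \<longrightarrow> v \<in> S) \<and> Bo (\<not> g) \<in> S"
proof -
  have st: "PhiM n mf v \<in> S" if "v \<in> S" for v using cl that by blast
  have vin: "vin n v" if "v \<in> S" for v using S that by (auto simp: Vs_def)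
  have ph: "PhiM n mf v = mstep n (mf (gad v)) v" if "v \<in> S" for v using vin[OF that] by (simp add: PhiM_def)
  show ?thesis
  proof (cases "mf g")
    case None
    have Bo': "Ou g 2 \<in> S" using st[OF b] ph[OF b] None by simp
    have ou: "Ou g i \<in> S \<and> Ce g i \<in> S \<and> In g i \<in> S" if "2 \<le> i" "i \<le> n" for i
      using that
    proof (induction i rule: nat_induct_at_least)
      case base
      have "Ce g 2 \<in> S" using st[OF Bo'] ph[OF Bo'] None by simp
      moreover then have "In g 2 \<in> S" using st ph None by fastforce
      ultimately show ?case using Bo' by simp
    next
      case (Suc i)
      then have "In g i \<in> S" by simp
      then have o: "Ou g (Suc i) \<in> S" using st ph None Suc by fastforce
      then have c: "Ce g (Suc i) \<in> S" using st ph None by fastforce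
      then have "In g (Suc i) \<in> S" using st ph None by fastforce
      then show ?case using o c by simp
    qed
    have "In g n \<in> S" using ou n2 by simp
    then have h: "Hh g \<in> S" using st ph None by fastforce
    then have bi: "Bi g \<in> S" using st ph None by fastforce
    then have "Bo (\<not> g) \<in> S" using st ph None by fastforce
    moreover have "v \<in> S" if "v \<in> Vs n" "gad v = g" for v
      using that ou h bi b by (cases v) (auto simp: Vs_def)
    ultimately show ?thesis by blast
  next
    case (Some \<sigma>)
    have sc: "cycp {1..n} \<sigma>" using val[of g] Some by (simp add: validm_def)
    have h: "Hh g \<in> S" using st[OF b] ph[OF b] Some by simp
    define T where "T = {1} \<union> {i. 2 \<le> i \<and> i \<le> n \<and> In g i \<in> S}"
    have io: "Ou g i \<in> S" if "In g i \<in> S" for i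
    proof -
      have "Ce g i \<in> S" using st[OF that] ph[OF that] Some by simp
      then show ?thesis using st ph Some by fastforce
    qed
    have Tcl: "\<sigma> s \<in> T" if "s \<in> T" for s
    proof (cases "s = 1")
      case True
      then have "In g (\<sigma> 1) \<in> S" using st[OF h] ph[OF h] Some by simp
      then show ?thesis using True s_one[OF n2 sc] by (simp add: T_def)
    next
      case False
      then have s: "2 \<le> s" "s \<le> n" "In g s \<in> S" using that by (auto simp: T_def)
      then have o: "Ou g s \<in> S" using io by blast
      show ?thesis
      proof (cases "\<sigma> s = 1")
        case True then show ?thesis by (simp add: T_def)
      next
        case False
        then have "In g (\<sigma> s) \<in> S" using st[OF o] ph[OF o] Some by simp
        then show ?thesis using s_other[OF n2 sc s(1,2) False] by (simp add: T_def)
      qed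
    qed
    have allT: "j \<in> T" if "j \<in> {1..n}" for j
      by (rule cycp_invariant[OF sc, of 1 T]) (use that n2 Tcl in \<open>auto simp: T_def\<close>)
    have inS: "In g i \<in> S \<and> Ce g i \<in> S \<and> Ou g i \<in> S" if "2 \<le> i" "i \<le> n" for i
    proof -
      have "In g i \<in> S" using allT[of i] that by (auto simp: T_def)
      moreover have "Ce g i \<in> S" using st[OF calculation] ph[OF calculation] Some by simp
      ultimately show ?thesis using io by blast
    qed
    obtain i where i: "\<sigma> i = 1" using s_surj[OF n2 sc] by blast
    have "i \<in> {1..n}"
    proof (rule ccontr)
      assume a: "i \<notin> {1..n}"
      then have "i = 1" using i s_out[OF n2 sc, of i] by simp
      then show False using a n2 by simp
    qed
    moreover have "i \<noteq> 1" using i s_one[OF n2 sc] by auto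
    ultimately have "Ou g i \<in> S" using inS by auto
    then have bi: "Bi g \<in> S" using st ph Some i by fastforce
    then have "Bo (\<not> g) \<in> S" using st ph Some by fastforce
    moreover have "v \<in> S" if "v \<in> Vs n" "gad v = g" for v
      using that inS h bi b by (cases v) (auto simp: Vs_def)
    ultimately show ?thesis by blast
  qed
qed

lemma PhiM_cyc: "cycp (Vs n) (PhiM n mf)"
proof (rule invariant_cycp[OF PhiM_perm])
  fix S assume S: "S \<subseteq> Vs n" and cl: "\<forall>s\<in>S. PhiM n mf s \<in> S" and ne: "S \<noteq> {}"
  have all: "Vs n \<subseteq> S'" if S': "S' \<subseteq> Vs n" "\<forall>s\<in>S'. PhiM n mf s \<in> S'" "Bo g \<in> S'" for S' g
  proof
    fix v assume v: "v \<in> Vs n"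
    have f1: "(\<forall>v\<in>Vs n. gad v = g \<longrightarrow> v \<in> S') \<and> Bo (\<not> g) \<in> S'" by (rule fill[OF S'])
    have f2: "(\<forall>v\<in>Vs n. gad v = (\<not> g) \<longrightarrow> v \<in> S') \<and> Bo (\<not> \<not> g) \<in> S'"
      by (rule fill[OF S'(1,2)]) (use f1 in blast)
    show "v \<in> S'" using f1 f2 v by (cases "gad v = g") auto
  qed
  show "Vs n \<subseteq> S"
  proof (cases "Bo True \<in> S")
    case True then show ?thesis using all[OF S cl] by blast
  next
    case False
    have C: "Vs n - S \<subseteq> Vs n" by blast
    have "\<forall>s\<in>Vs n - S. PhiM n mf s \<in> Vs n - S"
    proof
      fix s assume s: "s \<in> Vs n - S"
      have "PhiM n mf s \<in> Vs n" using PhiM_in[of s] s by (auto simp: Vs_def)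
      moreover have "PhiM n mf s \<notin> S"
        using complement_invariant[OF PhiM_perm finite_Vs S cl] s by blast
      ultimately show "PhiM n mf s \<in> Vs n - S" by blast
    qed
    moreover have "Bo True \<in> Vs n - S" using False by (simp add: Vs_def)
    ultimately have "Vs n \<subseteq> Vs n - S" using all[OF C] by blast
    then show ?thesis using ne S by blast
  qed
qed

end

lemma E_gad: "E n v w \<Longrightarrow> gad w = gad v \<or> (\<exists>h. v = Bi h \<and> w = Bo (\<not> h))"
  by (cases v) auto

fun idx :: "vtx \<Rightarrow> nat" where
  "idx (In g j) = j" | "idx _ = 1"

context
  fixes n :: nat and \<pi> :: "vtx \<Rightarrow> vtx"
  assumes n2: "2 \<le> n" and pc: "cycp (Vs n) \<pi>" and good: "\<And>v. vin n v \<Longrightarrow> E n v (\<pi> v)"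
begin

lemma pperm: "\<pi> permutes Vs n" using pc by (simp add: cycp_def)

lemma pin: "vin n v \<Longrightarrow> vin n (\<pi> v)"
  using permutes_in[OF pperm, of v] by (simp add: Vs_def)

lemma pout: "\<not> vin n v \<Longrightarrow> \<pi> v = v"
  using permutes_not_in[OF pperm, of v] by (simp add: Vs_def)

lemma pinj: "\<pi> u = \<pi> v \<longleftrightarrow> u = v"
  using permutes_inj[OF pperm] by (simp add: inj_eq)

lemma psurj: "\<exists>u. \<pi> u = w"
  using permutes_surj[OF pperm] by (metis surjD)

lemma psurj': assumes "vin n w" obtains u where "vin n u" "\<pi> u = w" "E n u w"
proof -
  obtain u where u: "\<pi> u = w" using psurj by blast
  have "vin n u" using u assms pout by (cases "vin n u") auto
  then show ?thesis using that u good by blast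
qed

lemma no2: assumes "vin n u" "vin n w" "\<pi> u = w" "\<pi> w = u" shows False
proof -
  have "\<forall>y\<in>Vs n. y \<in> {u, w}"
    using cycp_invariant[OF pc, of u "{u,w}"] assms by (auto simp: Vs_def)
  then have "Bo True \<in> {u,w}" "Bo False \<in> {u,w}" "Hh True \<in> {u,w}" by (auto simp: Vs_def)
  then show False by auto
qed

lemma invS: assumes "S \<subseteq> Vs n" "\<And>s. s \<in> S \<Longrightarrow> \<pi> s \<in> S" "x \<in> S" "vin n y" shows "y \<in> S"
  using cycp_invariant[OF pc, of x S y] assms by (auto simp: Vs_def)

definition Ht :: "bool \<Rightarrow> nat \<Rightarrow> bool" where "Ht g i \<longleftrightarrow> \<pi> (Ce g i) = Ou g i"

context fixes g :: bool and i :: nat assumes i: "2 \<le> i" "i \<le> n"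
begin

lemma Ce_cases: "\<pi> (Ce g i) = Ou g i \<or> \<pi> (Ce g i) = In g i"
  using good[of "Ce g i"] i by auto

lemma L1: assumes "Ht g i" shows "\<pi> (In g i) = Ce g i"
proof -
  obtain u where u: "vin n u" "\<pi> u = Ce g i" "E n u (Ce g i)" using psurj'[of "Ce g i"] i by auto
  have "u = In g i \<or> u = Ou g i" using u(3) by (cases u) auto
  moreover have "u \<noteq> Ou g i"
  proof
    assume "u = Ou g i"
    then show False using no2[of "Ce g i" "Ou g i"] u assms i by (auto simp: Ht_def)
  qed
  ultimately show ?thesis using u by simp
qed

lemma L2: assumes "\<not> Ht g i" shows "\<pi> (Ce g i) = In g i" "\<pi> (Ou g i) = Ce g i"
proof -
  show c: "\<pi> (Ce g i) = In g i" using Ce_cases assms by (auto simp: Ht_def)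
  obtain u where u: "vin n u" "\<pi> u = Ce g i" "E n u (Ce g i)" using psurj'[of "Ce g i"] i by auto
  have "u = In g i \<or> u = Ou g i" using u(3) by (cases u) auto
  moreover have "u \<noteq> In g i"
  proof
    assume "u = In g i"
    then show False using no2[of "Ce g i" "In g i"] u c i by auto
  qed
  ultimately show "\<pi> (Ou g i) = Ce g i" using u by simp
qed

lemma H_Ou: assumes "Ht g i" shows "\<pi> (Ou g i) = Bi g \<or> (\<exists>j. j \<noteq> i \<and> \<pi> (Ou g i) = In g j)"
proof -
  have "\<pi> (Ou g i) \<noteq> Ce g i" using L1[OF assms] pinj[of "In g i" "Ou g i"] by auto
  then show ?thesis using good[of "Ou g i"] i by auto
qed

lemma R_In: assumes "\<not> Ht g i" shows "(i < n \<and> \<pi> (In g i) = Ou g (Suc i)) \<or> (i = n \<and> \<pi> (In g i) = Hh g)"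
proof -
  have "\<pi> (In g i) \<noteq> Ce g i" using L2[OF assms] pinj[of "In g i" "Ou g i"] by auto
  then show ?thesis using good[of "In g i"] i by auto
qed

end

lemma prop_step: assumes "2 \<le> i" "i < n" shows "Ht g i \<longleftrightarrow> Ht g (Suc i)"
proof
  assume h: "Ht g i"
  show "Ht g (Suc i)"
  proof (rule ccontr)
    assume nh: "\<not> Ht g (Suc i)"
    have o: "\<pi> (Ou g (Suc i)) = Ce g (Suc i)" using L2(2)[OF _ _ nh] assms by simp
    have c: "\<pi> (Ce g (Suc i)) = In g (Suc i)" using L2(1)[OF _ _ nh] assms by simp
    obtain u where u: "vin n u" "\<pi> u = Ou g (Suc i)" "E n u (Ou g (Suc i))"
      using psurj'[of "Ou g (Suc i)"] assms by auto
    have "u = Ce g (Suc i) \<or> u = In g i" using u(3) assms by (cases u) auto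
    moreover have "u \<noteq> Ce g (Suc i)" using u c by auto
    moreover have "\<pi> (In g i) = Ce g i" using L1[OF _ _ h] assms by simp
    ultimately show False using u by auto
  qed
next
  assume h: "Ht g (Suc i)"
  show "Ht g i"
  proof (rule ccontr)
    assume nh: "\<not> Ht g i"
    have "\<pi> (In g i) = Ou g (Suc i)" using R_In[OF _ _ nh] assms by auto
    moreover have "\<pi> (Ce g (Suc i)) = Ou g (Suc i)" using h by (simp add: Ht_def)
    ultimately show False using pinj[of "In g i" "Ce g (Suc i)"] by auto
  qed
qed

lemma Ht_all: assumes "2 \<le> i" "i \<le> n" shows "Ht g i \<longleftrightarrow> Ht g 2"
  using assms
proof (induction i rule: nat_induct_at_least)
  case base then show ?case by simp
next
  case (Suc i) then show ?case using prop_step[of i g] by simp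
qed

lemma R_case: assumes nh2: "\<not> Ht g 2"
  shows "g" "\<And>v. vin n v \<Longrightarrow> gad v = g \<Longrightarrow> \<pi> v = rstep n v"
proof -
  have nh: "\<not> Ht g i" if "2 \<le> i" "i \<le> n" for i using Ht_all[OF that, of g] nh2 by simp
  obtain u where u: "vin n u" "\<pi> u = Ou g 2" "E n u (Ou g 2)" using psurj'[of "Ou g 2"] n2 by auto
  have c2: "\<pi> (Ce g 2) = In g 2" using L2(1)[OF _ n2 nh[OF _ n2]] n2 by simp
  have "u = Ce g 2 \<or> (u = Bo g \<and> g)" using u(3) u(1) by (cases u) auto
  then have ub: "u = Bo g" "g" using c2 u(2) by auto
  then show "g" by simp
  have bo: "\<pi> (Bo g) = Ou g 2" using u ub by simp
  have hh: "\<pi> (Hh g) = Bi g"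
  proof -
    have "(\<exists>j. \<pi> (Hh g) = In g j) \<or> \<pi> (Hh g) = Bi g" using good[of "Hh g"] by simp
    moreover have "\<pi> (Hh g) \<noteq> In g j" for j
    proof
      assume a: "\<pi> (Hh g) = In g j"
      then have j: "2 \<le> j" "j \<le> n" using pin[of "Hh g"] by auto
      have "\<pi> (Ce g j) = In g j" using L2(1)[OF j nh[OF j]] .
      then show False using a pinj[of "Hh g" "Ce g j"] by simp
    qed
    ultimately show ?thesis by blast
  qed
  fix v assume v: "vin n v" "gad v = g"
  show "\<pi> v = rstep n v"
  proof (cases v)
    case (Bo h) then show ?thesis using v bo by simp
  next
    case (Hh h) then show ?thesis using v hh by simp
  next
    case (Bi h) then show ?thesis using v good[of v] by simp
  next
    case (In h i) then show ?thesis using v R_In[OF _ _ nh] by auto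
  next
    case (Ce h i) then show ?thesis using v L2(1)[OF _ _ nh] by auto
  next
    case (Ou h i) then show ?thesis using v L2(2)[OF _ _ nh] by auto
  qed
qed

fun port :: "vtx \<Rightarrow> bool" where
  "port (In g i) = True" | "port (Ce g i) = True" | "port (Ou g i) = True" | "port _ = False"

fun pidx :: "vtx \<Rightarrow> nat" where
  "pidx (In g i) = i" | "pidx (Ce g i) = i" | "pidx (Ou g i) = i" | "pidx _ = 0"

lemma H_case: assumes h2: "Ht g 2"
  shows "\<exists>\<sigma>. cycp {1..n} \<sigma> \<and> (\<forall>v. vin n v \<longrightarrow> gad v = g \<longrightarrow> \<pi> v = hstep \<sigma> v)"
proof -
  have ht: "Ht g i" if "2 \<le> i" "i \<le> n" for i using Ht_all[OF that, of g] h2 by simp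
  have bo: "\<pi> (Bo g) = Hh g"
  proof -
    have "\<pi> (Ce g 2) = Ou g 2" using ht[OF _ n2] by (simp add: Ht_def)
    then have "\<pi> (Bo g) \<noteq> Ou g 2" using pinj[of "Bo g" "Ce g 2"] by auto
    then show ?thesis using good[of "Bo g"] by auto
  qed
  have hnb: "\<pi> (Hh g) \<noteq> Bi g"
  proof
    assume hb: "\<pi> (Hh g) = Bi g"
    define S where "S = {v. vin n v \<and> gad v = g \<and> port v}"
    have "Bo g \<in> S"
    proof (rule invS)
      show "S \<subseteq> Vs n" by (auto simp: S_def Vs_def)
      show "In g 2 \<in> S" using n2 by (simp add: S_def)
      show "vin n (Bo g)" by simp
      fix s assume s: "s \<in> S"
      then have s': "vin n s" "gad s = g" "port s" by (auto simp: S_def)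
      have ps: "vin n (\<pi> s)" using pin[OF s'(1)] .
      show "\<pi> s \<in> S"
      proof (cases s)
        case (In h i) then show ?thesis using s' L1[OF _ _ ht] by (auto simp: S_def)
      next
        case (Ce h i) then show ?thesis using s' ht by (auto simp: S_def Ht_def)
      next
        case (Ou h i)
        then have "\<pi> s \<noteq> Bi g" using hb pinj[of s "Hh g"] by auto
        then show ?thesis using H_Ou[OF _ _ ht, of i] s' ps Ou by (auto simp: S_def)
      qed (use s' in auto)
    qed
    then show False by (simp add: S_def)
  qed
  obtain j0 where j0: "\<pi> (Hh g) = In g j0" using good[of "Hh g"] hnb by auto
  have j0r: "2 \<le> j0" "j0 \<le> n" using pin[of "Hh g"] j0 by auto
  define \<sigma> where "\<sigma> k = (if k = 1 then idx (\<pi> (Hh g)) else if 2 \<le> k \<and> k \<le> n then idx (\<pi> (Ou g k)) else k)" for k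
  have s1: "\<sigma> 1 = j0" using j0 by (simp add: \<sigma>_def)
  have ou: "\<pi> (Ou g i) = (if \<sigma> i = 1 then Bi g else In g (\<sigma> i)) \<and> 1 \<le> \<sigma> i \<and> \<sigma> i \<le> n"
    if "2 \<le> i" "i \<le> n" for i
  proof -
    have "\<pi> (Ou g i) = Bi g \<or> (\<exists>j. j \<noteq> i \<and> \<pi> (Ou g i) = In g j)" using H_Ou[OF that ht[OF that]] .
    then show ?thesis
    proof
      assume "\<pi> (Ou g i) = Bi g" then show ?thesis using that by (simp add: \<sigma>_def)
    next
      assume "\<exists>j. j \<noteq> i \<and> \<pi> (Ou g i) = In g j"
      then obtain j where j: "\<pi> (Ou g i) = In g j" by blast
      then have "2 \<le> j" "j \<le> n" using pin[of "Ou g i"] that by auto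
      then show ?thesis using j that by (simp add: \<sigma>_def)
    qed
  qed
  have agr: "\<pi> v = hstep \<sigma> v" if "vin n v" "gad v = g" for v
  proof (cases v)
    case (Bo h) then show ?thesis using that bo by simp
  next
    case (Hh h) then show ?thesis using that j0 s1 by simp
  next
    case (Bi h) then show ?thesis using that good[of v] by simp
  next
    case (In h i) then show ?thesis using that L1[OF _ _ ht] by auto
  next
    case (Ce h i) then show ?thesis using that ht by (auto simp: Ht_def)
  next
    case (Ou h i) then show ?thesis using that ou by auto
  qed
  have srange: "\<sigma> k \<in> {1..n}" if "k \<in> {1..n}" for k
    using that ou[of k] j0r s1 by (cases "k = 1") auto
  have sout: "\<sigma> k = k" if "k \<notin> {1..n}" for k using that n2 by (auto simp: \<sigma>_def)
  define xv where "xv k = (if k = 1 then Hh g else Ou g k)" for k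
  have pxv: "\<pi> (xv k) = (if \<sigma> k = 1 then Bi g else In g (\<sigma> k))" if "k \<in> {1..n}" for k
    using that ou[of k] j0 s1 j0r by (cases "k = 1") (auto simp: xv_def)
  have sinj: "inj_on \<sigma> {1..n}"
  proof (rule inj_onI)
    fix a b assume a: "a \<in> {1..n}" and b: "b \<in> {1..n}" and e: "\<sigma> a = \<sigma> b"
    have "\<pi> (xv a) = \<pi> (xv b)" using pxv[OF a] pxv[OF b] e by simp
    then have "xv a = xv b" using pinj by simp
    then show "a = b" by (auto simp: xv_def split: if_splits)
  qed
  have sperm: "\<sigma> permutes {1..n}"
  proof -
    have sub: "\<sigma> ` {1..n} \<subseteq> {1..n}" using srange by blast
    have "\<sigma> ` {1..n} = {1..n}" by (rule endo_inj_surj[OF _ sub sinj]) simp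
    then have "bij_betw \<sigma> {1..n} {1..n}" using sinj by (simp add: bij_betw_def)
    then show ?thesis using sout by (meson bij_imp_permutes)
  qed
  have scyc: "cycp {1..n} \<sigma>"
  proof (rule invariant_cycp[OF sperm])
    fix T assume T: "T \<subseteq> {1..n}" and cl: "\<forall>s\<in>T. \<sigma> s \<in> T" and ne: "T \<noteq> {}"
    show "{1..n} \<subseteq> T"
    proof (cases "1 \<in> T")
      case True
      define S where "S = {v. vin n v \<and> (gad v \<noteq> g \<or> \<not> port v \<or> pidx v \<in> T)}"
      have sub: "S \<subseteq> Vs n" by (auto simp: S_def Vs_def)
      have clS: "\<pi> s \<in> S" if s: "s \<in> S" for s
      proof -
        have s': "vin n s" using s by (simp add: S_def)
        have ps: "vin n (\<pi> s)" using pin[OF s'] .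
        show ?thesis
        proof (cases "gad s = g")
          case False
          then show ?thesis using E_gad[OF good[OF s']] ps by (auto simp: S_def)
        next
          case gs: True
          have e: "\<pi> s = hstep \<sigma> s" using agr[OF s' gs] .
          show ?thesis
          proof (cases s)
            case (Ou h i)
            then have "i \<in> T" using s gs by (simp add: S_def)
            then have "\<sigma> i \<in> T" using cl by blast
            then show ?thesis using e ps Ou by (auto simp: S_def)
          next
            case (Hh h)
            then have "\<sigma> 1 \<in> T" using cl True by blast
            then show ?thesis using e ps Hh by (auto simp: S_def)
          qed (use s e ps in \<open>auto simp: S_def\<close>)
        qed
      qed
      show ?thesis
      proof
        fix k assume k: "k \<in> {1..n}"
        show "k \<in> T"
        proof (cases "k = 1")
          case True then show ?thesis using \<open>1 \<in> T\<close> by simp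
        next
          case False
          then have "In g k \<in> S" using invS[OF sub clS, of "Bo g" "In g k"] k by (auto simp: S_def)
          then show ?thesis by (simp add: S_def)
        qed
      qed
    next
      case False
      obtain t where t: "t \<in> T" using ne by blast
      then have t2: "2 \<le> t" "t \<le> n" using T False by (cases "t = 1"; auto)+
      define S where "S = {v. vin n v \<and> gad v = g \<and> port v \<and> pidx v \<in> T}"
      have sub: "S \<subseteq> Vs n" by (auto simp: S_def Vs_def)
      have clS: "\<pi> s \<in> S" if s: "s \<in> S" for s
      proof -
        have s': "vin n s" "gad s = g" "port s" "pidx s \<in> T" using s by (auto simp: S_def)
        have ps: "vin n (\<pi> s)" using pin[OF s'(1)] .
        have e: "\<pi> s = hstep \<sigma> s" using agr[OF s'(1,2)] .
        show ?thesis
        proof (cases s)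
          case (Ou h i)
          then have "\<sigma> i \<in> T" using s'(4) cl by auto
          then have "\<sigma> i \<noteq> 1" using False by auto
          then show ?thesis using e ps Ou s' \<open>\<sigma> i \<in> T\<close> by (auto simp: S_def)
        qed (use s' e ps in \<open>auto simp: S_def\<close>)
      qed
      have "Bo g \<in> S" using invS[OF sub clS, of "In g t" "Bo g"] t t2 by (auto simp: S_def)
      then show ?thesis by (simp add: S_def)
    qed
  qed
  show ?thesis using scyc agr by blast
qed

lemma classify: "\<exists>mf. (\<forall>g. validm n g (mf g)) \<and> \<pi> = PhiM n mf"
proof -
  define mf where "mf g = (if Ht g 2 then Some (SOME \<sigma>. cycp {1..n} \<sigma> \<and> (\<forall>v. vin n v \<longrightarrow> gad v = g \<longrightarrow> \<pi> v = hstep \<sigma> v)) else None)" for g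
  have mfH: "cycp {1..n} \<sigma> \<and> (\<forall>v. vin n v \<longrightarrow> gad v = g \<longrightarrow> \<pi> v = hstep \<sigma> v)"
    if "mf g = Some \<sigma>" for g \<sigma>
  proof -
    have h: "Ht g 2" using that by (simp add: mf_def split: if_splits)
    then have eq: "\<sigma> = (SOME \<sigma>. cycp {1..n} \<sigma> \<and> (\<forall>v. vin n v \<longrightarrow> gad v = g \<longrightarrow> \<pi> v = hstep \<sigma> v))"
      using that by (simp add: mf_def)
    show ?thesis using someI_ex[OF H_case[OF h]] unfolding eq[symmetric] .
  qed
  have mfR: "\<not> Ht g 2" if "mf g = None" for g using that by (simp add: mf_def split: if_splits)
  have val: "validm n g (mf g)" for g
  proof (cases "mf g")
    case None then show ?thesis using R_case(1)[OF mfR[OF None]] by (simp add: validm_def)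
  next
    case (Some \<sigma>) then show ?thesis using mfH[OF Some] by (simp add: validm_def)
  qed
  have "\<pi> v = PhiM n mf v" for v
  proof (cases "vin n v")
    case False then show ?thesis using pout by (simp add: PhiM_def)
  next
    case True
    show ?thesis
    proof (cases "mf (gad v)")
      case None then show ?thesis using True R_case(2)[OF mfR[OF None] True] by (simp add: PhiM_def)
    next
      case (Some \<sigma>) then show ?thesis using True mfH[OF Some] by (simp add: PhiM_def)
    qed
  qed
  then show ?thesis using val by blast
qed

end

lemma PhiM_inj_mf:
  assumes n2: "2 \<le> n" and v1: "\<And>g. validm n g (mf1 g)" and v2: "\<And>g. validm n g (mf2 g)"
    and e: "PhiM n mf1 = PhiM n mf2"
  shows "mf1 = mf2"
proof
  fix g
  have e': "mstep n (mf1 (gad v)) v = mstep n (mf2 (gad v)) v" if "vin n v" for v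
    using fun_cong[OF e, of v] that by (simp add: PhiM_def)
  have bo: "mstep n (mf1 g) (Bo g) = mstep n (mf2 g) (Bo g)" using e'[of "Bo g"] by simp
  show "mf1 g = mf2 g"
  proof (cases "mf1 g")
    case None
    then show ?thesis using bo by (cases "mf2 g") auto
  next
    case (Some \<sigma>1)
    then obtain \<sigma>2 where s2: "mf2 g = Some \<sigma>2" using bo by (cases "mf2 g") auto
    have c1: "cycp {1..n} \<sigma>1" using v1[of g] Some by (simp add: validm_def)
    have c2: "cycp {1..n} \<sigma>2" using v2[of g] s2 by (simp add: validm_def)
    have "\<sigma>1 k = \<sigma>2 k" for k
    proof -
      consider "k = 1" | "2 \<le> k \<and> k \<le> n" | "k \<notin> {1..n}" by fastforce
      then show ?thesis
      proof cases
        case 1 then show ?thesis using e'[of "Hh g"] Some s2 by simp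
      next
        case 2
        then have "hstep \<sigma>1 (Ou g k) = hstep \<sigma>2 (Ou g k)" using e'[of "Ou g k"] Some s2 by simp
        then show ?thesis by (auto split: if_splits)
      next
        case 3 then show ?thesis using s_out[OF n2 c1] s_out[OF n2 c2] by simp
      qed
    qed
    then show ?thesis using Some s2 by auto
  qed
qed

lemma good_set:
  assumes n2: "2 \<le> n"
  shows "{\<pi>. cycp (Vs n) \<pi> \<and> (\<forall>v. vin n v \<longrightarrow> E n v (\<pi> v))} = PhiM n ` {mf. \<forall>g. validm n g (mf g)}"
proof
  show "{\<pi>. cycp (Vs n) \<pi> \<and> (\<forall>v. vin n v \<longrightarrow> E n v (\<pi> v))} \<subseteq> PhiM n ` {mf. \<forall>g. validm n g (mf g)}"
  proof
    fix \<pi> assume "\<pi> \<in> {\<pi>. cycp (Vs n) \<pi> \<and> (\<forall>v. vin n v \<longrightarrow> E n v (\<pi> v))}"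
    then have "cycp (Vs n) \<pi>" "\<And>v. vin n v \<Longrightarrow> E n v (\<pi> v)" by auto
    from classify[OF n2 this] show "\<pi> \<in> PhiM n ` {mf. \<forall>g. validm n g (mf g)}" by blast
  qed
  show "PhiM n ` {mf. \<forall>g. validm n g (mf g)} \<subseteq> {\<pi>. cycp (Vs n) \<pi> \<and> (\<forall>v. vin n v \<longrightarrow> E n v (\<pi> v))}"
    using PhiM_cyc[OF n2] PhiM_E[OF n2] by blast
qed

fun wt :: "(nat \<Rightarrow> nat \<Rightarrow> 'a) \<Rightarrow> 'a \<Rightarrow> 'a \<Rightarrow> vtx \<Rightarrow> vtx \<Rightarrow> 'a::comm_ring_1" where
  "wt X y z (Bo g) v = (case v of Hh _ \<Rightarrow> y | _ \<Rightarrow> 1)"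
| "wt X y z (Hh g) v = (case v of In _ j \<Rightarrow> X 1 j | _ \<Rightarrow> 1)"
| "wt X y z (Bi g) v = z"
| "wt X y z (Ou g i) v = (case v of In _ j \<Rightarrow> X i j | Bi _ \<Rightarrow> X i 1 | _ \<Rightarrow> 1)"
| "wt X y z (In g i) v = 1"
| "wt X y z (Ce g i) v = 1"

definition Wt :: "(nat \<Rightarrow> nat \<Rightarrow> 'a) \<Rightarrow> 'a \<Rightarrow> 'a \<Rightarrow> nat \<Rightarrow> vtx \<Rightarrow> vtx \<Rightarrow> 'a::comm_ring_1" where
  "Wt X y z n u v = (if E n u v then wt X y z u v else 0)"

definition Vg :: "nat \<Rightarrow> bool \<Rightarrow> vtx set" where "Vg n g = {v. vin n v \<and> gad v = g}"

lemma Vg_eq: "Vg n g = {Bo g, Hh g, Bi g} \<union> (In g ` {2..n} \<union> (Ce g ` {2..n} \<union> Ou g ` {2..n}))"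
proof
  show "Vg n g \<subseteq> {Bo g, Hh g, Bi g} \<union> (In g ` {2..n} \<union> (Ce g ` {2..n} \<union> Ou g ` {2..n}))"
  proof
    fix v assume "v \<in> Vg n g" then show "v \<in> {Bo g, Hh g, Bi g} \<union> (In g ` {2..n} \<union> (Ce g ` {2..n} \<union> Ou g ` {2..n}))"
      by (cases v) (auto simp: Vg_def)
  qed
  show "{Bo g, Hh g, Bi g} \<union> (In g ` {2..n} \<union> (Ce g ` {2..n} \<union> Ou g ` {2..n})) \<subseteq> Vg n g"
    by (auto simp: Vg_def)
qed

lemma prod_Vg: "(\<Prod>v\<in>Vg n g. f v) = f (Bo g) * f (Hh g) * f (Bi g) *
   ((\<Prod>i\<in>{2..n}. f (In g i)) * ((\<Prod>i\<in>{2..n}. f (Ce g i)) * (\<Prod>i\<in>{2..n}. f (Ou g i))))"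
proof -
  have inj: "inj_on (In g) A" "inj_on (Ce g) A" "inj_on (Ou g) A" for A by (auto intro: inj_onI)
  have "(\<Prod>v\<in>Vg n g. f v) = (\<Prod>v\<in>{Bo g, Hh g, Bi g}. f v) *
     ((\<Prod>v\<in>In g ` {2..n}. f v) * ((\<Prod>v\<in>Ce g ` {2..n}. f v) * (\<Prod>v\<in>Ou g ` {2..n}. f v)))"
    unfolding Vg_eq
    by (subst prod.union_disjoint, simp, simp, fastforce)+ (rule refl)
  also have "\<dots> = f (Bo g) * f (Hh g) * f (Bi g) *
   ((\<Prod>i\<in>{2..n}. f (In g i)) * ((\<Prod>i\<in>{2..n}. f (Ce g i)) * (\<Prod>i\<in>{2..n}. f (Ou g i))))"
    by (simp add: prod.reindex[OF inj(1)] prod.reindex[OF inj(2)] prod.reindex[OF inj(3)] mult_ac)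
  finally show ?thesis .
qed

lemma G_H: assumes n2: "2 \<le> n" and sc: "cycp {1..n} \<sigma>"
  shows "(\<Prod>v\<in>Vg n g. Wt X y z n v (hstep \<sigma> v)) = y * z * (\<Prod>i\<in>{1..n}. X i (\<sigma> i))"
proof -
  have E: "E n v (hstep \<sigma> v)" if "vin n v" for v using hstep_E[OF n2 sc that] .
  have ou: "(\<Prod>i\<in>{2..n}. Wt X y z n (Ou g i) (hstep \<sigma> (Ou g i))) = (\<Prod>i\<in>{2..n}. X i (\<sigma> i))"
  proof (rule prod.cong[OF refl])
    fix i assume "i \<in> {2..n}"
    then have "E n (Ou g i) (hstep \<sigma> (Ou g i))" using E[of "Ou g i"] by simp
    then show "Wt X y z n (Ou g i) (hstep \<sigma> (Ou g i)) = X i (\<sigma> i)" by (auto simp: Wt_def)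
  qed
  have inn: "(\<Prod>i\<in>{2..n}. Wt X y z n (In g i) (hstep \<sigma> (In g i))) = 1"
    by (rule prod.neutral) (use E in \<open>auto simp: Wt_def\<close>)
  have ce: "(\<Prod>i\<in>{2..n}. Wt X y z n (Ce g i) (hstep \<sigma> (Ce g i))) = 1"
    by (rule prod.neutral) (use E in \<open>auto simp: Wt_def\<close>)
  have s1: "Wt X y z n (Hh g) (hstep \<sigma> (Hh g)) = X 1 (\<sigma> 1)" by (simp add: Wt_def)
  have "{1..n} = insert 1 {2..n}" using n2 by auto
  then have "(\<Prod>i\<in>{1..n}. X i (\<sigma> i)) = X 1 (\<sigma> 1) * (\<Prod>i\<in>{2..n}. X i (\<sigma> i))" by simp
  then show ?thesis unfolding prod_Vg using ou inn ce s1 by (simp add: Wt_def mult_ac)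
qed

lemma G_R: assumes n2: "2 \<le> n"
  shows "(\<Prod>v\<in>Vg n True. Wt X y z n v (rstep n v)) = z"
proof -
  have E: "E n v (rstep n v)" if "vin n v" "gad v" for v using rstep_E[OF n2 that] .
  have ou: "(\<Prod>i\<in>{2..n}. Wt X y z n (Ou True i) (rstep n (Ou True i))) = 1"
    by (rule prod.neutral) (auto simp: Wt_def)
  have inn: "(\<Prod>i\<in>{2..n}. Wt X y z n (In True i) (rstep n (In True i))) = 1"
    by (rule prod.neutral) (use E in \<open>auto simp: Wt_def\<close>)
  have ce: "(\<Prod>i\<in>{2..n}. Wt X y z n (Ce True i) (rstep n (Ce True i))) = 1"
    by (rule prod.neutral) (auto simp: Wt_def)
  show ?thesis unfolding prod_Vg using ou inn ce by (simp add: Wt_def)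
qed

lemma gadget_sum:
  fixes X :: "nat \<Rightarrow> nat \<Rightarrow> 'a::comm_ring_1"
  assumes n2: "2 \<le> n"
  shows "(\<Sum>\<pi>\<in>{\<pi>. cycp (Vs n) \<pi>}. \<Prod>v\<in>Vs n. Wt X y z n v (\<pi> v)) =
    z ^ 2 * (y * (\<Sum>\<sigma>\<in>{\<sigma>. cycp {1..n} \<sigma>}. \<Prod>i\<in>{1..n}. X i (\<sigma> i))
     + y ^ 2 * (\<Sum>\<sigma>\<in>{\<sigma>. cycp {1..n} \<sigma>}. \<Prod>i\<in>{1..n}. X i (\<sigma> i)) ^ 2)"
proof -
  define F where "F \<pi> = (\<Prod>v\<in>Vs n. Wt X y z n v (\<pi> v))" for \<pi>
  define C where "C = {\<sigma>. cycp {1..n} \<sigma>}"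
  define H where "H = (\<Sum>\<sigma>\<in>C. \<Prod>i\<in>{1..n}. X i (\<sigma> i))"
  define D where "D = {mf. \<forall>g. validm n g (mf g)}"
  define Good where "Good = {\<pi>. cycp (Vs n) \<pi> \<and> (\<forall>v. vin n v \<longrightarrow> E n v (\<pi> v))}"
  define G where "G m g = (\<Prod>v\<in>Vg n g. Wt X y z n v (mstep n m v))" for m g
  have finC: "finite C" unfolding C_def by (rule finite_cycp) simp
  have s1: "(\<Sum>\<pi>\<in>{\<pi>. cycp (Vs n) \<pi>}. F \<pi>) = (\<Sum>\<pi>\<in>Good. F \<pi>)"
  proof (rule sum.mono_neutral_right)
    show "finite {\<pi>. cycp (Vs n) \<pi>}" by (rule finite_cycp[OF finite_Vs])
    show "Good \<subseteq> {\<pi>. cycp (Vs n) \<pi>}" by (auto simp: Good_def)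
    show "\<forall>\<pi>\<in>{\<pi>. cycp (Vs n) \<pi>} - Good. F \<pi> = 0"
    proof
      fix \<pi> assume "\<pi> \<in> {\<pi>. cycp (Vs n) \<pi>} - Good"
      then obtain v where v: "vin n v" "\<not> E n v (\<pi> v)" by (auto simp: Good_def)
      show "F \<pi> = 0" unfolding F_def
        by (rule prod_zero[OF finite_Vs]) (use v in \<open>auto simp: Vs_def Wt_def\<close>)
    qed
  qed
  have s2: "(\<Sum>\<pi>\<in>Good. F \<pi>) = (\<Sum>mf\<in>D. F (PhiM n mf))"
  proof -
    have "inj_on (PhiM n) D" by (rule inj_onI) (use PhiM_inj_mf[OF n2] in \<open>auto simp: D_def\<close>)
    moreover have "Good = PhiM n ` D" unfolding Good_def D_def by (rule good_set[OF n2])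
    ultimately show ?thesis by (simp add: sum.reindex)
  qed
  have s3: "F (PhiM n mf) = G (mf False) False * G (mf True) True" for mf
  proof -
    have "Vs n = Vg n False \<union> Vg n True" by (auto simp: Vs_def Vg_def)
    moreover have "Vg n False \<inter> Vg n True = {}" by (auto simp: Vg_def)
    moreover have "finite (Vg n g)" for g by (rule finite_subset[OF _ finite_Vs]) (auto simp: Vg_def Vs_def)
    ultimately have "F (PhiM n mf) = (\<Prod>v\<in>Vg n False. Wt X y z n v (PhiM n mf v)) * (\<Prod>v\<in>Vg n True. Wt X y z n v (PhiM n mf v))"
      unfolding F_def by (simp add: prod.union_disjoint)
    moreover have "(\<Prod>v\<in>Vg n g. Wt X y z n v (PhiM n mf v)) = G (mf g) g" for g
      unfolding G_def by (rule prod.cong) (auto simp: Vg_def PhiM_def)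
    ultimately show ?thesis by simp
  qed
  define MF where "MF = {m. validm n False m}"
  define MT where "MT = {m. validm n True m}"
  have s4: "(\<Sum>mf\<in>D. G (mf False) False * G (mf True) True) = (\<Sum>(a, b)\<in>MF \<times> MT. G a False * G b True)"
  proof (rule sum.reindex_bij_witness[of _ "\<lambda>(a, b) g. if g then b else a" "\<lambda>mf. (mf False, mf True)"])
    show "\<And>a. a \<in> D \<Longrightarrow> (case (a False, a True) of (a, b) \<Rightarrow> \<lambda>g. if g then b else a) = a"
      by (auto simp: fun_eq_iff)
    show "\<And>a. a \<in> D \<Longrightarrow> (a False, a True) \<in> MF \<times> MT" by (auto simp: D_def MF_def MT_def)
    show "\<And>b. b \<in> MF \<times> MT \<Longrightarrow> ((case b of (a, b) \<Rightarrow> \<lambda>g. if g then b else a) False, (case b of (a, b) \<Rightarrow> \<lambda>g. if g then b else a) True) = b"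
      by auto
    show "(case b of (a, b) \<Rightarrow> \<lambda>g. if g then b else a) \<in> D" if bm: "b \<in> MF \<times> MT" for b
    proof -
      obtain a1 b1 where b: "b = (a1, b1)" "validm n False a1" "validm n True b1"
        using bm by (auto simp: MF_def MT_def)
      have "validm n g (if g then b1 else a1)" for g using b by (cases g) auto
      then show ?thesis using b by (simp add: D_def)
    qed
    show "\<And>a. a \<in> D \<Longrightarrow> (case (a False, a True) of (a, b) \<Rightarrow> G a False * G b True) = G (a False) False * G (a True) True"
      by simp
  qed
  have s5: "(\<Sum>(a, b)\<in>MF \<times> MT. G a False * G b True) = (\<Sum>a\<in>MF. G a False) * (\<Sum>b\<in>MT. G b True)"
    by (simp add: sum_product sum.cartesian_product)
  have MF: "MF = Some ` C" by (auto simp: MF_def C_def validm_def)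
  have MT: "MT = insert None (Some ` C)" by (auto simp: MT_def C_def validm_def)
  have GS: "(\<Sum>a\<in>Some ` C. G a g) = y * z * H" for g
  proof -
    have "(\<Sum>a\<in>Some ` C. G a g) = (\<Sum>\<sigma>\<in>C. G (Some \<sigma>) g)" by (simp add: sum.reindex)
    also have "\<dots> = (\<Sum>\<sigma>\<in>C. y * z * (\<Prod>i\<in>{1..n}. X i (\<sigma> i)))"
      by (rule sum.cong) (auto simp: G_def C_def G_H[OF n2])
    also have "\<dots> = y * z * H" by (simp add: H_def sum_distrib_left)
    finally show ?thesis .
  qed
  have sF: "(\<Sum>a\<in>MF. G a False) = y * z * H" using GS MF by simp
  have sT: "(\<Sum>b\<in>MT. G b True) = z + y * z * H"
    using GS MT finC by (simp add: G_def G_R[OF n2])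
  have "(\<Sum>\<pi>\<in>{\<pi>. cycp (Vs n) \<pi>}. F \<pi>) = (y * z * H) * (z + y * z * H)"
    using s1 s2 s3 s4 s5 sF sT by simp
  also have "\<dots> = z ^ 2 * (y * H + y ^ 2 * H ^ 2)" by (simp add: algebra_simps power2_eq_square)
  finally show ?thesis by (simp add: F_def H_def C_def)
qed

definition voc :: "'a::comm_semiring_1 mpoly \<Rightarrow> bool" where
  "voc p \<longleftrightarrow> (\<exists>j. p = mVar j) \<or> (\<exists>c. p = mConst c)"

lemma voc_0: "voc 0" unfolding voc_def by (metis mConst_0)
lemma voc_1: "voc 1" unfolding voc_def by (metis mConst_1)
lemma voc_Var: "voc (mVar j)" unfolding voc_def by blast

lemma voc_Wt: assumes "\<And>i j. voc (X i j)"
  shows "voc (Wt X (mVar 0) (mVar 1) n u v)"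
  using assms voc_0 voc_1 voc_Var
  by (cases u; cases v) (auto simp: Wt_def split: vtx.splits)

lemma xvar_inj: "xvar i j = xvar i' j' \<longleftrightarrow> i = i' \<and> j = j'"
  unfolding xvar_def by (metis add_right_cancel prod.inject prod_encode_inverse)

lemma proj_gadget:
  fixes X :: "nat \<Rightarrow> nat \<Rightarrow> 'a::comm_ring_1 mpoly"
  assumes n2: "2 \<le> n" and vX: "\<And>i j. voc (X i j)"
  shows "proj_le (mVar 1 ^ 2 * (mVar 0 * (\<Sum>\<sigma>\<in>{\<sigma>. cycp {1..n} \<sigma>}. \<Prod>i\<in>{1..n}. X i (\<sigma> i))
     + mVar 0 ^ 2 * (\<Sum>\<sigma>\<in>{\<sigma>. cycp {1..n} \<sigma>}. \<Prod>i\<in>{1..n}. X i (\<sigma> i)) ^ 2)) (HC (card (Vs n)))"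
proof -
  define m where "m = card (Vs n)"
  define W where "W = Wt X (mVar 0) (mVar 1) n"
  obtain f where f: "bij_betw f {1..m} (Vs n)"
    using finite_same_card_bij[of "{1..m}" "Vs n"] finite_Vs by (auto simp: m_def)
  define \<alpha> where "\<alpha> k = (if 2 \<le> k then (case prod_decode (k - 2) of (i, j) \<Rightarrow> W (f i) (f j)) else mConst 0)" for k
  have ax: "\<alpha> (xvar i j) = W (f i) (f j)" for i j by (simp add: \<alpha>_def xvar_def)
  have va: "voc (\<alpha> k)" for k
  proof (cases "2 \<le> k")
    case True
    obtain i j where "prod_decode (k - 2) = (i, j)" by (cases "prod_decode (k - 2)")
    then show ?thesis using True voc_Wt[OF vX] by (simp add: \<alpha>_def W_def)
  next
    case False then show ?thesis using voc_0 by (simp add: \<alpha>_def)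
  qed
  have "msubst \<alpha> (HC m) = (\<Sum>\<pi>\<in>{\<pi>. cycp {1..m} \<pi>}. \<Prod>i\<in>{1..m}. W (f i) (f (\<pi> i)))"
    by (simp add: HC_cycp msubst_sum msubst_prod ax)
  also have "\<dots> = (\<Sum>\<rho>\<in>{\<rho>. cycp (Vs n) \<rho>}. \<Prod>v\<in>Vs n. W v (\<rho> v))"
    by (rule cycp_reindex[OF f]) simp
  also have "\<dots> = mVar 1 ^ 2 * (mVar 0 * (\<Sum>\<sigma>\<in>{\<sigma>. cycp {1..n} \<sigma>}. \<Prod>i\<in>{1..n}. X i (\<sigma> i))
     + mVar 0 ^ 2 * (\<Sum>\<sigma>\<in>{\<sigma>. cycp {1..n} \<sigma>}. \<Prod>i\<in>{1..n}. X i (\<sigma> i)) ^ 2)"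
    unfolding W_def by (rule gadget_sum[OF n2])
  finally show ?thesis unfolding proj_le_def m_def using va unfolding voc_def by metis
qed

definition sw :: "nat \<Rightarrow> nat" where "sw k = (if k = 1 then 2 else if k = 2 then 1 else k)"

lemma cyc2: "{\<sigma>. cycp {1..2} \<sigma>} = {sw}"
proof
  show "{\<sigma>. cycp {1..2} \<sigma>} \<subseteq> {sw}"
  proof
    fix \<sigma> assume "\<sigma> \<in> {\<sigma>. cycp {1..2::nat} \<sigma>}"
    then have c: "cycp {1..2::nat} \<sigma>" by simp
    have r1: "\<sigma> 1 \<in> {1..2}" "\<sigma> 2 \<in> {1..2}" using s_range[OF _ c] by auto
    have f1: "\<sigma> 1 \<noteq> 1" "\<sigma> 2 \<noteq> 2" using s_nofix[OF _ c] by auto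
    have o: "\<sigma> k = k" if "k \<notin> {1..2}" for k using s_out[OF _ c that] by simp
    have "\<sigma> k = sw k" for k
      using r1 f1 o[of k] by (cases "k = 1"; cases "k = 2") (auto simp: sw_def)
    then show "\<sigma> \<in> {sw}" by auto
  qed
  show "{sw} \<subseteq> {\<sigma>. cycp {1..2} \<sigma>}"
  proof -
    have e: "{1..2::nat} = {1, 2}" by auto
    have "bij_betw sw {1..2} {1..2}" unfolding e
      by (auto simp: bij_betw_def inj_on_def sw_def)
    moreover have "\<forall>x. x \<notin> {1..2} \<longrightarrow> sw x = x" by (auto simp: sw_def)
    ultimately have p: "sw permutes {1..2}" by (meson bij_imp_permutes)
    have "\<exists>k. (sw ^^ k) i = j" if "i \<in> {1..2}" "j \<in> {1..2}" for i j
    proof (cases "i = j")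
      case True then show ?thesis by (metis funpow_0)
    next
      case False then have "(sw ^^ 1) i = j" using that by (auto simp: sw_def)
      then show ?thesis by blast
    qed
    then show ?thesis using p by (simp add: cycp_def)
  qed
qed

lemma cyc1: "{\<sigma>. cycp {1..1} \<sigma>} = {id :: nat \<Rightarrow> nat}"
proof
  show "{\<sigma>. cycp {1..1} \<sigma>} \<subseteq> {id :: nat \<Rightarrow> nat}"
  proof
    fix \<sigma> :: "nat \<Rightarrow> nat" assume "\<sigma> \<in> {\<sigma>. cycp {1..1} \<sigma>}"
    then have p: "\<sigma> permutes {1..1}" by (simp add: cycp_def)
    have "\<sigma> k = k" for k
    proof (cases "k \<in> {1..1}")
      case True then show ?thesis using permutes_in[OF p True] by simp
    next
      case False then show ?thesis using permutes_not_in[OF p False] by simp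
    qed
    then show "\<sigma> \<in> {id}" by auto
  qed
  show "{id :: nat \<Rightarrow> nat} \<subseteq> {\<sigma>. cycp {1..1} \<sigma>}"
    by (auto simp: cycp_def permutes_id intro: exI[of _ 0])
qed

lemma cyc0: "{\<sigma>. cycp {1..0} \<sigma>} = {id :: nat \<Rightarrow> nat}"
  by (auto simp: cycp_def permutes_empty)

lemma HC_small: "HC 0 = (1 :: 'a::comm_ring_1 mpoly)" "HC 1 = (mVar (xvar 1 1) :: 'a mpoly)"
  unfolding HC_cycp cyc0 cyc1 by simp_all

lemma sum_cyc2: "(\<Sum>\<sigma>\<in>{\<sigma>. cycp {1..2} \<sigma>}. \<Prod>i\<in>{1..2::nat}. X i (\<sigma> i)) = X 1 2 * X 2 (1::nat)"
proof -
  have e: "{1..2::nat} = {1, 2}" by auto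
  have e': "{Suc 0..2} = {Suc 0, 2}" by auto
  show ?thesis unfolding cyc2 by (simp add: e' sw_def)
qed

lemma P_proj:
  fixes P :: "nat \<Rightarrow> 'a::comm_ring_1 mpoly"
  defines "P \<equiv> (\<lambda>n. mVar 1 ^ 2 * (mVar 0 * HC n + mVar 0 ^ 2 * HC n ^ 2))"
  shows "p_proj_le P HC"
  unfolding p_proj_le_def
proof (intro exI conjI allI)
  define t where "t n = card (Vs (max n 2))" for n
  show "poly_bounded t" unfolding poly_bounded_def
  proof (intro exI allI)
    fix n
    have "t n \<le> 6 * max n 2 + 6" using card_Vs unfolding t_def .
    also have "\<dots> \<le> 18 * (n + 1) ^ 1" by simp
    finally show "t n \<le> 18 * (n + 1) ^ 1" .
  qed
  fix n
  show "proj_le (P n) (HC (t n))"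
  proof (cases "2 \<le> n")
    case True
    have "proj_le (mVar 1 ^ 2 * (mVar 0 * (\<Sum>\<sigma>\<in>{\<sigma>. cycp {1..n} \<sigma>}. \<Prod>i\<in>{1..n}. (mVar (xvar i (\<sigma> i)) :: 'a mpoly))
     + mVar 0 ^ 2 * (\<Sum>\<sigma>\<in>{\<sigma>. cycp {1..n} \<sigma>}. \<Prod>i\<in>{1..n}. mVar (xvar i (\<sigma> i))) ^ 2)) (HC (card (Vs n)))"
      by (rule proj_gadget[OF True]) (rule voc_Var)
    then show ?thesis using True by (simp add: P_def t_def HC_cycp max_def)
  next
    case False
    define X :: "nat \<Rightarrow> nat \<Rightarrow> 'a mpoly" where
      "X i j = (if i = 1 \<and> j = 2 \<and> n = 1 then mVar (xvar 1 1) else 1)" for i j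
    have vX: "voc (X i j)" for i j by (simp add: X_def voc_Var voc_1)
    have H: "(\<Sum>\<sigma>\<in>{\<sigma>. cycp {1..2} \<sigma>}. \<Prod>i\<in>{1..2::nat}. X i (\<sigma> i)) = HC n"
    proof -
      have "n = 0 \<or> n = 1" using False by auto
      then show ?thesis unfolding sum_cyc2 using HC_small[where 'a='a] by (auto simp: X_def)
    qed
    have "proj_le (mVar 1 ^ 2 * (mVar 0 * (\<Sum>\<sigma>\<in>{\<sigma>. cycp {1..2} \<sigma>}. \<Prod>i\<in>{1..2::nat}. X i (\<sigma> i))
     + mVar 0 ^ 2 * (\<Sum>\<sigma>\<in>{\<sigma>. cycp {1..2} \<sigma>}. \<Prod>i\<in>{1..2}. X i (\<sigma> i)) ^ 2)) (HC (card (Vs 2)))"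
      by (rule proj_gadget) (simp, rule vX)
    then show ?thesis using False unfolding H by (simp add: P_def t_def max_def)
  qed
qed

context
  fixes \<phi> :: "'a::comm_ring_1 \<Rightarrow> 'b::comm_ring_1"
  assumes h0: "\<phi> 0 = 0" and h1: "\<phi> 1 = 1" and hadd: "\<And>a b. \<phi> (a + b) = \<phi> a + \<phi> b"
    and hmult: "\<And>a b. \<phi> (a * b) = \<phi> a * \<phi> b"
begin

lemma lookup_pmap: "Poly_Mapping.lookup (Poly_Mapping.map \<phi> p) k = \<phi> (Poly_Mapping.lookup p k)"
  by (simp add: Poly_Mapping.map.rep_eq when_def h0)

lemma pmap_add: "Poly_Mapping.map \<phi> (p + q) = Poly_Mapping.map \<phi> p + Poly_Mapping.map \<phi> q"
  by (rule poly_mapping_eqI) (simp add: lookup_pmap lookup_add hadd)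

lemma pmap_0: "Poly_Mapping.map \<phi> 0 = 0"
  by (rule poly_mapping_eqI) (simp add: lookup_pmap h0)

lemma pmap_sum: "Poly_Mapping.map \<phi> (\<Sum>x\<in>A. f x) = (\<Sum>x\<in>A. Poly_Mapping.map \<phi> (f x))"
  by (induction A rule: infinite_finite_induct) (auto simp: pmap_add pmap_0)

lemma pmap_single: "Poly_Mapping.map \<phi> (Poly_Mapping.single k c) = Poly_Mapping.single k (\<phi> c)"
  using h0 by simp

lemma pmap_mult: "Poly_Mapping.map \<phi> (p * q) = Poly_Mapping.map \<phi> p * Poly_Mapping.map \<phi> q"
proof -
  have "p * q = (\<Sum>a\<in>Poly_Mapping.keys p. Poly_Mapping.single a (Poly_Mapping.lookup p a)) *
     (\<Sum>b\<in>Poly_Mapping.keys q. Poly_Mapping.single b (Poly_Mapping.lookup q b))"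
    by (simp only: poly_mapping_decomp[symmetric])
  also have "\<dots> = (\<Sum>a\<in>Poly_Mapping.keys p. \<Sum>b\<in>Poly_Mapping.keys q.
     Poly_Mapping.single (a + b) (Poly_Mapping.lookup p a * Poly_Mapping.lookup q b))"
    by (simp add: sum_product mult_single)
  finally have "Poly_Mapping.map \<phi> (p * q) = (\<Sum>a\<in>Poly_Mapping.keys p. \<Sum>b\<in>Poly_Mapping.keys q.
     Poly_Mapping.single a (\<phi> (Poly_Mapping.lookup p a)) * Poly_Mapping.single b (\<phi> (Poly_Mapping.lookup q b)))"
    by (simp add: pmap_sum pmap_single hmult mult_single)
  also have "\<dots> = (\<Sum>a\<in>Poly_Mapping.keys p. Poly_Mapping.single a (\<phi> (Poly_Mapping.lookup p a))) *
     (\<Sum>b\<in>Poly_Mapping.keys q. Poly_Mapping.single b (\<phi> (Poly_Mapping.lookup q b)))"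
    by (simp add: sum_product)
  also have "\<dots> = Poly_Mapping.map \<phi> p * Poly_Mapping.map \<phi> q"
    by (subst (3) poly_mapping_decomp[of p], subst (3) poly_mapping_decomp[of q]) (simp add: pmap_sum pmap_single)
  finally show ?thesis .
qed

lemma pmap_1: "Poly_Mapping.map \<phi> 1 = 1"
  using pmap_single[of 0 1] h1 by (simp flip: single_one)

lemma pmap_prod: "Poly_Mapping.map \<phi> (\<Prod>x\<in>A. f x) = (\<Prod>x\<in>A. Poly_Mapping.map \<phi> (f x))"
  by (induction A rule: infinite_finite_induct) (auto simp: pmap_mult pmap_1)

lemma pmap_power: "Poly_Mapping.map \<phi> (p ^ k) = Poly_Mapping.map \<phi> p ^ k"
  by (induction k) (auto simp: pmap_mult pmap_1)

lemma pmap_mVar: "Poly_Mapping.map \<phi> (mVar j) = mVar j"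
  by (simp add: mVar_def pmap_single h1)

lemma pmap_mConst: "Poly_Mapping.map \<phi> (mConst c) = mConst (\<phi> c)"
  by (simp add: mConst_def pmap_single)

end

lemma mConst_power: "mConst (a ^ k) = (mConst a :: 'a::comm_semiring_1 mpoly) ^ k"
  by (induction k) (simp_all add: mConst_mult)

lemma F1: "(\<lambda>c::'a::field. Fract [:c:] 1) 0 = 0" "(\<lambda>c::'a::field. Fract [:c:] 1) 1 = 1"
  "\<And>a b. (\<lambda>c::'a::field. Fract [:c:] 1) (a + b) = (\<lambda>c. Fract [:c:] 1) a + (\<lambda>c. Fract [:c:] 1) b"
  "\<And>a b. (\<lambda>c::'a::field. Fract [:c:] 1) (a * b) = (\<lambda>c. Fract [:c:] 1) a * (\<lambda>c. Fract [:c:] 1) b"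
  by (simp_all add: Zero_fract_def One_fract_def one_pCons mult.commute)

lemma F2: "(\<lambda>c::'a::field poly. Fract c 1) 0 = 0" "(\<lambda>c::'a::field poly. Fract c 1) 1 = 1"
  "\<And>a b. (\<lambda>c::'a::field poly. Fract c 1) (a + b) = (\<lambda>c. Fract c 1) a + (\<lambda>c. Fract c 1) b"
  "\<And>a b. (\<lambda>c::'a::field poly. Fract c 1) (a * b) = (\<lambda>c. Fract c 1) a * (\<lambda>c. Fract c 1) b"
  by (simp_all add: Zero_fract_def One_fract_def)

lemma F3: "(\<lambda>c::'a::field. [:c:]) 0 = 0" "(\<lambda>c::'a::field. [:c:]) 1 = 1"
  "\<And>a b. (\<lambda>c::'a::field. [:c:]) (a + b) = (\<lambda>c. [:c:]) a + (\<lambda>c. [:c:]) b"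
  "\<And>a b. (\<lambda>c::'a::field. [:c:]) (a * b) = (\<lambda>c. [:c:]) a * (\<lambda>c. [:c:]) b"
  by (simp_all add: one_pCons)

lemma lift_F_hom:
  "lift_F (p + q) = lift_F p + lift_F q" "lift_F (p * q) = lift_F p * lift_F q"
  "lift_F (p ^ k) = lift_F p ^ k" "lift_F (mVar j) = mVar j"
  "lift_F (\<Sum>x\<in>A. f x) = (\<Sum>x\<in>A. lift_F (f x))" "lift_F (\<Prod>x\<in>A. f x) = (\<Prod>x\<in>A. lift_F (f x))"
  unfolding lift_F_def
  by (simp_all add: pmap_add[of "\<lambda>c. Fract [:c:] 1", OF F1] pmap_mult[of "\<lambda>c. Fract [:c:] 1", OF F1] pmap_power[of "\<lambda>c. Fract [:c:] 1", OF F1] pmap_mVar[of "\<lambda>c. Fract [:c:] 1", OF F1]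
      pmap_sum[of "\<lambda>c. Fract [:c:] 1", OF F1] pmap_prod[of "\<lambda>c. Fract [:c:] 1", OF F1])

lemma eps_nz: "eps \<noteq> 0"
  by (simp add: eps_def Zero_fract_def eq_fract)

lemma border_one:
  fixes P :: "nat \<Rightarrow> 'a::field mpoly"
  defines "P \<equiv> (\<lambda>n. mVar 1 ^ 2 * (mVar 0 * HC n + mVar 0 ^ 2 * HC n ^ 2))"
  shows "border_le (HC n) (P n)"
proof -
  define L where "L = lift_F (HC n :: 'a mpoly)"
  define \<alpha> :: "nat \<Rightarrow> 'a poly fract mpoly" where
    "\<alpha> k = (if k = 0 then mConst (eps ^ 2) else if k = 1 then mConst (inverse eps) else mVar k)" for k
  have va: "(\<exists>j. \<alpha> i = mVar j) \<or> (\<exists>c. \<alpha> i = mConst c)" for i by (auto simp: \<alpha>_def)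
  have L: "L = (\<Sum>\<pi> \<in> {\<pi>. is_n_cycle n \<pi>}. \<Prod>i\<in>{1..n}. mVar (xvar i (\<pi> i)))"
    by (simp add: L_def HC_def lift_F_hom)
  have aL: "msubst \<alpha> L = L"
    unfolding L by (simp add: msubst_sum msubst_prod \<alpha>_def xvar_def)
  have lP: "lift_F (P n) = mVar 1 ^ 2 * (mVar 0 * L + mVar 0 ^ 2 * L ^ 2)"
    by (simp add: P_def L_def lift_F_hom)
  have "msubst \<alpha> (lift_F (P n)) = mConst (inverse eps) ^ 2 * (mConst (eps ^ 2) * L + mConst (eps ^ 2) ^ 2 * L ^ 2)"
    unfolding lP by (simp add: msubst_add msubst_mult msubst_power aL \<alpha>_def)
  also have "\<dots> = mConst (inverse eps ^ 2 * eps ^ 2) * L + mConst (inverse eps ^ 2 * (eps ^ 2) ^ 2) * L ^ 2"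
    by (simp add: mConst_mult mConst_power algebra_simps)
  also have "\<dots> = L + mConst (eps * eps) * L ^ 2"
    using eps_nz by (simp add: field_simps power2_eq_square eps_nz)
  finally have eq1: "msubst \<alpha> (lift_F (P n)) = L + mConst (eps * eps) * L ^ 2" .
  define h :: "'a poly mpoly" where "h = mConst [:0, 1:] * Poly_Mapping.map (\<lambda>c. [:c:]) (HC n) ^ 2"
  have comp: "lift_Feps (Poly_Mapping.map (\<lambda>c. [:c:]) p) = lift_F p" for p :: "'a mpoly"
    unfolding lift_Feps_def lift_F_def
    by (rule poly_mapping_eqI) (simp add: lookup_pmap[of "\<lambda>c. Fract c 1", OF F2] lookup_pmap[of "\<lambda>c. [:c:]", OF F3] lookup_pmap[of "\<lambda>c. Fract [:c:] 1", OF F1])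
  have lh: "lift_Feps h = mConst eps * L ^ 2"
    unfolding h_def lift_Feps_def
    by (simp add: pmap_mult[of "\<lambda>c. Fract c 1", OF F2] pmap_power[of "\<lambda>c. Fract c 1", OF F2] pmap_mConst[of "\<lambda>c. Fract c 1", OF F2] eps_def L_def
        comp[unfolded lift_Feps_def])
  have "lift_F (HC n) + mConst eps * lift_Feps h = msubst \<alpha> (lift_F (P n))"
    unfolding eq1 lh L_def by (simp add: mConst_mult mult_ac)
  then show ?thesis unfolding border_le_def proj_le_def using va by metis
qed

definition deg :: "(nat \<Rightarrow>\<^sub>0 nat) \<Rightarrow> nat" where
  "deg m = (\<Sum>i\<in>Poly_Mapping.keys m. Poly_Mapping.lookup m i)"

definition bnd :: "nat \<Rightarrow> nat set \<Rightarrow> 'a::comm_semiring_1 mpoly \<Rightarrow> bool" where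
  "bnd d A p \<longleftrightarrow> (\<forall>m\<in>Poly_Mapping.keys p. Poly_Mapping.keys m \<subseteq> A \<and> deg m \<le> d)"

lemma deg_superset: "finite S \<Longrightarrow> Poly_Mapping.keys m \<subseteq> S \<Longrightarrow> deg m = (\<Sum>i\<in>S. Poly_Mapping.lookup m i)"
  unfolding deg_def by (rule sum.mono_neutral_left) (auto simp: in_keys_iff)

lemma deg_add: "deg (a + b) = deg a + deg b"
proof -
  let ?S = "Poly_Mapping.keys a \<union> Poly_Mapping.keys b"
  have f: "finite ?S" by simp
  show ?thesis
    by (simp add: deg_superset[OF f] keys_add deg_superset[OF f, of a] deg_superset[OF f, of b]
        lookup_add sum.distrib)
qed

lemma bnd_mono: assumes "bnd d A p" "d \<le> d'" "A \<subseteq> A'" shows "bnd d' A' p"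
  unfolding bnd_def
proof
  fix m assume "m \<in> Poly_Mapping.keys p"
  then have "Poly_Mapping.keys m \<subseteq> A \<and> deg m \<le> d" using assms(1) by (simp add: bnd_def)
  then show "Poly_Mapping.keys m \<subseteq> A' \<and> deg m \<le> d'" using assms(2,3) by auto
qed

lemma bnd_0: "bnd d A 0" by (simp add: bnd_def)

lemma bnd_add: "bnd d A p \<Longrightarrow> bnd d A q \<Longrightarrow> bnd d A (p + q)"
  unfolding bnd_def using keys_add[of p q] by blast

lemma bnd_sum: "(\<And>x. x \<in> X \<Longrightarrow> bnd d A (f x)) \<Longrightarrow> bnd d A (\<Sum>x\<in>X. f x)"
  by (induction X rule: infinite_finite_induct) (auto simp: bnd_0 bnd_add)

lemma bnd_mult: assumes "bnd d A p" "bnd e A q" shows "bnd (d + e) A (p * q)"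
  unfolding bnd_def
proof
  fix m assume m: "m \<in> Poly_Mapping.keys (p * q)"
  have "m \<in> {a + b | a b. a \<in> Poly_Mapping.keys p \<and> b \<in> Poly_Mapping.keys q}"
    by (rule subsetD[OF keys_mult m])
  then obtain a b where ab: "m = a + b" "a \<in> Poly_Mapping.keys p" "b \<in> Poly_Mapping.keys q"
    by (auto simp only: mem_Collect_eq)
  have k: "Poly_Mapping.keys m \<subseteq> Poly_Mapping.keys a \<union> Poly_Mapping.keys b"
    unfolding ab(1) by (rule keys_add)
  have dg: "deg m = deg a + deg b" unfolding ab(1) by (rule deg_add)
  have ha: "Poly_Mapping.keys a \<subseteq> A \<and> deg a \<le> d" using assms(1) ab(2) by (simp add: bnd_def)
  have hb: "Poly_Mapping.keys b \<subseteq> A \<and> deg b \<le> e" using assms(2) ab(3) by (simp add: bnd_def)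
  show "Poly_Mapping.keys m \<subseteq> A \<and> deg m \<le> d + e"
  proof
    show "Poly_Mapping.keys m \<subseteq> A" using k ha hb by blast
    show "deg m \<le> d + e" using dg ha hb by simp
  qed
qed

lemma bnd_1: "bnd 0 A 1"
  by (simp add: bnd_def deg_def)

lemma bnd_prod: "(\<And>x. x \<in> X \<Longrightarrow> bnd 1 A (f x)) \<Longrightarrow> bnd (card X) A (\<Prod>x\<in>X. f x)"
proof (induction X rule: infinite_finite_induct)
  case (infinite X) then show ?case using bnd_1 by simp
next
  case empty then show ?case using bnd_1 by simp
next
  case (insert x F)
  then show ?case using bnd_mult[of 1 A "f x" "card F" "\<Prod>x\<in>F. f x"] by simp
qed

lemma bnd_mVar: "bnd 1 {j} (mVar j :: 'a::comm_semiring_1 mpoly)"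
  by (simp add: bnd_def mVar_def deg_def)

lemma bnd_mvars: "bnd d A p \<Longrightarrow> mvars p \<subseteq> A"
  unfolding bnd_def mvars_def by blast

lemma bnd_mdegree: assumes "bnd d A p" shows "mdegree p \<le> d"
proof -
  have "mdegree p = Max (insert 0 (deg ` Poly_Mapping.keys p))" by (simp add: mdegree_def deg_def)
  also have "\<dots> \<le> d"
  proof (rule Max.boundedI)
    fix a assume "a \<in> insert 0 (deg ` Poly_Mapping.keys p)"
    then show "a \<le> d" using assms by (auto simp: bnd_def)
  qed auto
  finally show ?thesis .
qed

lemma P_family:
  fixes P :: "nat \<Rightarrow> 'a::comm_ring_1 mpoly"
  defines "P \<equiv> (\<lambda>n. mVar 1 ^ 2 * (mVar 0 * HC n + mVar 0 ^ 2 * HC n ^ 2))"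
  shows "p_family P"
proof -
  define A where "A n = {0, 1} \<union> (\<lambda>(i, j). xvar i j) ` ({1..n} \<times> {1..n})" for n
  have hc: "bnd n (A n) (HC n :: 'a mpoly)" for n
    unfolding HC_def
  proof (rule bnd_sum)
    fix \<pi> assume "\<pi> \<in> {\<pi>. is_n_cycle n \<pi>}"
    then have p: "\<pi> permutes {1..n}" by (simp add: is_n_cycle_def)
    have "bnd (card {1..n}) (A n) (\<Prod>i\<in>{1..n}. mVar (xvar i (\<pi> i)) :: 'a mpoly)"
    proof (rule bnd_prod)
      fix i assume i: "i \<in> {1..n}"
      then have "\<pi> i \<in> {1..n}" using permutes_in[OF p] by blast
      then have "xvar i (\<pi> i) \<in> (\<lambda>(i, j). xvar i j) ` ({1..n} \<times> {1..n})"
        using i by (intro image_eqI[of _ _ "(i, \<pi> i)"]) auto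
      then have "{xvar i (\<pi> i)} \<subseteq> A n" by (simp add: A_def)
      then show "bnd 1 (A n) (mVar (xvar i (\<pi> i)))" using bnd_mono[OF bnd_mVar, of 1] by simp
    qed
    then show "bnd n (A n) (\<Prod>i\<in>{1..n}. mVar (xvar i (\<pi> i)) :: 'a mpoly)" by simp
  qed
  have v0: "bnd 1 (A n) (mVar 0 :: 'a mpoly)" for n
    by (rule bnd_mono[OF bnd_mVar]) (auto simp: A_def)
  have v1: "bnd 1 (A n) (mVar 1 :: 'a mpoly)" for n
    by (rule bnd_mono[OF bnd_mVar]) (auto simp: A_def)
  have bP: "bnd (2 * n + 4) (A n) (P n)" for n
  proof -
    have z2: "bnd 2 (A n) (mVar 1 ^ 2 :: 'a mpoly)"
      unfolding power2_eq_square by (rule bnd_mono[OF bnd_mult[OF v1[of n] v1[of n]]]) auto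
    have y2: "bnd 2 (A n) (mVar 0 ^ 2 :: 'a mpoly)"
      unfolding power2_eq_square by (rule bnd_mono[OF bnd_mult[OF v0[of n] v0[of n]]]) auto
    have t1: "bnd (2 * n + 2) (A n) (mVar 0 * HC n :: 'a mpoly)"
      by (rule bnd_mono[OF bnd_mult[OF v0[of n] hc[of n]]]) auto
    have t2: "bnd (2 * n + 2) (A n) (mVar 0 ^ 2 * HC n ^ 2 :: 'a mpoly)"
      unfolding power2_eq_square[of "HC n :: 'a mpoly"] by (rule bnd_mono[OF bnd_mult[OF y2 bnd_mult[OF hc[of n] hc[of n]]]]) auto
    have b: "bnd (2 + (2 * n + 2)) (A n) (mVar 1 ^ 2 * (mVar 0 * HC n + mVar 0 ^ 2 * HC n ^ 2) :: 'a mpoly)"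
      by (rule bnd_mult[OF z2 bnd_add[OF t1 t2]])
    have e: "P n = mVar 1 ^ 2 * (mVar 0 * HC n + mVar 0 ^ 2 * HC n ^ 2)" by (simp only: P_def)
    show ?thesis unfolding e by (rule bnd_mono[OF b]) auto
  qed
  have cA: "card (A n) \<le> 2 + n * n" for n
  proof -
    have "card (A n) \<le> card {0::nat, 1} + card ((\<lambda>(i, j). xvar i j) ` ({1..n} \<times> {1..n}))"
      unfolding A_def by (rule card_Un_le)
    also have "\<dots> \<le> 2 + card ({1..n} \<times> {1..n})"
      using card_image_le[of "{1..n} \<times> {1..n}" "\<lambda>(i, j). xvar i j"] by simp
    finally show ?thesis by (simp add: card_cartesian_product)
  qed
  have finA: "finite (A n)" for n by (simp add: A_def)
  show ?thesis unfolding p_family_def poly_bounded_def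
  proof (intro conjI exI allI)
    fix n
    have "card (mvars (P n)) \<le> card (A n)" by (rule card_mono[OF finA bnd_mvars[OF bP]])
    also have "\<dots> \<le> 2 + n * n" by (rule cA)
    also have "\<dots> \<le> 2 * (n + 1) ^ 2" by (simp add: power2_eq_square algebra_simps)
    finally show "card (mvars (P n)) \<le> 2 * (n + 1) ^ 2" .
  next
    fix n
    have "mdegree (P n) \<le> 2 * n + 4" by (rule bnd_mdegree[OF bP])
    also have "\<dots> \<le> 4 * (n + 1) ^ 1" by simp
    finally show "mdegree (P n) \<le> 4 * (n + 1) ^ 1" .
  qed
qed

theorem lemma4:
  fixes P :: "nat \<Rightarrow> 'a::field mpoly"
  defines "P \<equiv> (\<lambda>n. mVar 1 ^ 2 * (mVar 0 * HC n + mVar 0 ^ 2 * HC n ^ 2))"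
  shows "P \<in> VNPC_border"
proof -
  have fam: "p_family P" unfolding P_def by (rule P_family)
  have pr: "p_proj_le P HC" unfolding P_def by (rule P_proj)
  have bd: "p_border_le HC P"
    unfolding p_border_le_def
  proof (intro exI conjI allI)
    show "poly_bounded (\<lambda>n. n)" unfolding poly_bounded_def by (rule exI[of _ 1], rule exI[of _ 1]) simp
    fix n show "border_le (HC n) (P n)" unfolding P_def by (rule border_one)
  qed
  show ?thesis using fam pr bd by (simp add: VNPC_border_def VNP_def)
qed

end
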